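(* Let $d\ge2$, $\xi>0$, let $\sigma:\xi\mathbb{Z}^d\to\mathbb{R}$ be a generalized mass configuration, let $R>0$ be such that $\operatorname{supp}\sigma\subset\hat B_R:=B(0,R)\cap\xi\mathbb{Z}^d$, and let $x_1,x_2,\ldots$ be an infinitely covering sequence of $\hat B_R$. Let $\sigma_k:=T_{x_k}\cdots T_{x_1}\sigma$ and let $u_k$ be the $k$th odometer function, and let $\nu(x):=\lim_{k\to\infty}\sigma_k(x)$ and $u(x):=\lim_{k\to\infty}u_k(x)$ (these limits exist for every $x$). Then $\nu=\sigma+\Delta u$ and $u=U^\sigma-v$, where $$v(x):=\sup\{f(x): f:\xi\mathbb{Z}^d\to\mathbb{R},\ \Delta f\ge0 \text{ in }\hat B_R,\ f\le U^\sigma\text{ in }\xi\mathbb{Z}^d\}.$$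
   Context: A generalized mass configuration on $\xi\mathbb{Z}^d$ is a bounded function with finite support; $\eta_+=\max(\eta,0)$. For $y,y'\in\xi\mathbb{Z}^d$, $y'\sim y$ means $y'$ is one of the $2d$ lattice neighbours of $y$. The discrete Laplacian is $\Delta f(y)=\frac{1}{2d\xi^2}\sum_{y'\sim y}(f(y')-f(y))$. Toppling at $x$: $T_x\eta(y):=\eta(y)+\eta_+(x)\xi^2\Delta\delta_x(y)$ ($\delta_x$ the discrete delta at $x$). An infinitely covering sequence of $\hat B_R$ is a sequence of points of $\hat B_R$ in which every point of $\hat B_R$ appears infinitely often. The $k$th odometer function is $u_k(x):=\xi^2\sum_{1\le j\le k,\ x_j=x}(\sigma_{j-1})_+(x)$ with $\sigma_0=\sigma$. The discrete potential of a finitely supported $\mu:\xi\mathbb{Z}^d\to\mathbb{R}$ is $U^\mu(x):=\xi^d\sum_{y\in\xi\mathbb{Z}^d}g_\xi(x,y)\mu(y)$, where $g_\xi(x,y)=\frac{2}{\pi}\log\xi-\gamma_0(x/\xi,y/\xi)$ if $d=2$ and $g_\xi(x,y)=\xi^{2-d}\gamma_1(x/\xi,y/\xi)$ if $d\ge3$; here $\gamma_0(x,y)=\lim_{n\to\infty}(\mathbb{E}_x|\{k\le n:X_k=x\}|-\mathbb{E}_x|\{k\le n:X_k=y\}|)$ is the potential kernel of simple random walk $(X_k)$ on $\mathbb{Z}^2$ and $\gamma_1(x,y)=\mathbb{E}_x|\{k:X_k=y\}|$ is the Green's function of simple random walk on $\mathbb{Z}^d$, $d\ge3$. In particular $-\Delta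 U^\mu=\mu$. *)

theory Defs
  imports "HOL-Analysis.Analysis"
begin

text \<open>Lattice points of xi Z^d are represented by their integer coordinate vectors
  z :: int^'d (the actual point is xi * z). The dimension is d = CARD('d).\<close>

definition lat_nbrs :: "int^'d \<Rightarrow> (int^'d) set" where
  "lat_nbrs z = {z + axis i 1 | i. True} \<union> {z - axis i 1 | i. True}"

definition lat_point :: "real \<Rightarrow> int^'d \<Rightarrow> real^'d" where
  "lat_point \<xi> z = (\<chi> i. \<xi> * real_of_int (z $ i))"

definition lat_ball :: "real \<Rightarrow> real \<Rightarrow> (int^'d) set" where
  "lat_ball \<xi> R = {z. norm (lat_point \<xi> z) < R}"

definition disc_lap :: "real \<Rightarrow> (int^'d \<Rightarrow> real) \<Rightarrow> int^'d \<Rightarrow> real" where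
  "disc_lap \<xi> f z = (\<Sum>z'\<in>lat_nbrs z. f z' - f z) / (2 * real CARD('d) * \<xi>\<^sup>2)"

definition pos_part :: "real \<Rightarrow> real" where
  "pos_part t = max t 0"

definition ddelta :: "int^'d \<Rightarrow> int^'d \<Rightarrow> real" where
  "ddelta x y = (if y = x then 1 else 0)"

definition topple :: "real \<Rightarrow> int^'d \<Rightarrow> (int^'d \<Rightarrow> real) \<Rightarrow> int^'d \<Rightarrow> real" where
  "topple \<xi> x \<eta> y = \<eta> y + pos_part (\<eta> x) * \<xi>\<^sup>2 * disc_lap \<xi> (ddelta x) y"

text \<open>sigma_k = T_{x_k} ... T_{x_1} sigma (the sequence xs is indexed from 1).\<close>
fun topple_seq :: "real \<Rightarrow> (nat \<Rightarrow> int^'d) \<Rightarrow> (int^'d \<Rightarrow> real) \<Rightarrow> nat \<Rightarrow> int^'d \<Rightarrow> real" where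
  "topple_seq \<xi> xs \<sigma> 0 = \<sigma>"
| "topple_seq \<xi> xs \<sigma> (Suc k) = topple \<xi> (xs (Suc k)) (topple_seq \<xi> xs \<sigma> k)"

definition odometer :: "real \<Rightarrow> (nat \<Rightarrow> int^'d) \<Rightarrow> (int^'d \<Rightarrow> real) \<Rightarrow> nat \<Rightarrow> int^'d \<Rightarrow> real" where
  "odometer \<xi> xs \<sigma> k x =
     \<xi>\<^sup>2 * (\<Sum>j\<in>{j. 1 \<le> j \<and> j \<le> k \<and> xs j = x}. pos_part (topple_seq \<xi> xs \<sigma> (j - 1) x))"

definition infinitely_covering :: "(int^'d) set \<Rightarrow> (nat \<Rightarrow> int^'d) \<Rightarrow> bool" where
  "infinitely_covering B xs \<longleftrightarrow> (\<forall>k\<ge>1. xs k \<in> B) \<and> (\<forall>z\<in>B. infinite {k. k \<ge> 1 \<and> xs k = z})"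

text \<open>k-step transition probability of simple random walk on Z^d:
  srw_p k x y = P_x(X_k = y).\<close>
fun srw_p :: "nat \<Rightarrow> int^'d \<Rightarrow> int^'d \<Rightarrow> real" where
  "srw_p 0 x y = (if x = y then 1 else 0)"
| "srw_p (Suc k) x y = (\<Sum>z\<in>lat_nbrs x. srw_p k z y) / (2 * real CARD('d))"

definition exp_visits :: "nat \<Rightarrow> int^'d \<Rightarrow> int^'d \<Rightarrow> real" where
  "exp_visits n x y = (\<Sum>k\<le>n. srw_p k x y)"

definition pot_kernel :: "int^'d \<Rightarrow> int^'d \<Rightarrow> real" where
  "pot_kernel x y = lim (\<lambda>n. exp_visits n x x - exp_visits n x y)"

definition green_fn :: "int^'d \<Rightarrow> int^'d \<Rightarrow> real" where
  "green_fn x y = (\<Sum>k. srw_p k x y)"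

definition g_xi :: "real \<Rightarrow> int^'d \<Rightarrow> int^'d \<Rightarrow> real" where
  "g_xi \<xi> x y = (if CARD('d) = 2 then 2 / pi * ln \<xi> - pot_kernel x y
                  else \<xi> powr (2 - real CARD('d)) * green_fn x y)"

definition disc_potential :: "real \<Rightarrow> (int^'d \<Rightarrow> real) \<Rightarrow> int^'d \<Rightarrow> real" where
  "disc_potential \<xi> \<mu> x = \<xi> ^ CARD('d) * (\<Sum>y\<in>{y. \<mu> y \<noteq> 0}. g_xi \<xi> x y * \<mu> y)"

definition majorant_v :: "real \<Rightarrow> real \<Rightarrow> (int^'d \<Rightarrow> real) \<Rightarrow> int^'d \<Rightarrow> real" where
  "majorant_v \<xi> R \<sigma> x = Sup {f x | f. (\<forall>z\<in>lat_ball \<xi> R. disc_lap \<xi> f z \<ge> 0)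
                                      \<and> (\<forall>z. f z \<le> disc_potential \<xi> \<sigma> z)}"

end

theory Submission
  imports Defs
begin


definition NN :: "real measure" where "NN = restrict_space lborel {-pi..pi}"

lemma space_NN[simp]: "space NN = {-pi..pi}"
  by (simp add: NN_def)

lemma sets_NN_measurable: "(\<lambda>x. x) \<in> borel_measurable NN"
  unfolding NN_def by (simp add: measurable_restrict_space1)

lemma NN_finite: "finite_measure NN"
  unfolding NN_def
  by (intro finite_measureI) (simp add: emeasure_restrict_space)

lemma measure_NN: "measure NN {-pi..pi} = 2*pi"
  unfolding NN_def by (simp add: measure_restrict_space)

lemma int_NN_cont:
  fixes f :: "real \<Rightarrow> 'a::euclidean_space"
  assumes "continuous_on {-pi..pi} f"
  shows "integrable NN f" "integral\<^sup>L NN f = (LBINT x=-pi..pi. f x)"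
proof -
  have "set_integrable lborel {-pi..pi} f"
    by (rule borel_integrable_atLeastAtMost') (use assms in auto)
  then show "integrable NN f" unfolding NN_def set_integrable_def
    by (subst integrable_restrict_space) auto
  show "integral\<^sup>L NN f = (LBINT x=-pi..pi. f x)"
    unfolding NN_def
    by (subst integral_restrict_space) (auto simp: interval_integral_Icc set_lebesgue_integral_def)
qed

lemma int_exp_NN:
  fixes k :: int
  shows "integral\<^sup>L NN (\<lambda>t. exp (\<i> * of_real (t * real_of_int k))) = (if k = 0 then of_real (2*pi) else 0)"
proof (cases "k = 0")
  case True
  then show ?thesis
    using measure_NN by (simp add: scaleR_conv_of_real)
next
  case False
  have c: "continuous_on {-pi..pi} (\<lambda>t. exp (\<i> * of_real (t * real_of_int k)))"
    by (intro continuous_intros)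
  have "(LBINT t=-pi..pi. exp (\<i> * of_real (t * real_of_int k))) =
      exp (\<i> * of_real (pi * real_of_int k)) / (\<i> * k) - exp (\<i> * of_real (-pi * real_of_int k)) / (\<i> * k)"
  proof (rule interval_integral_FTC_finite)
    show "continuous_on {min (- pi) pi..max (- pi) pi} (\<lambda>t. exp (\<i> * of_real (t * real_of_int k)))"
      by (intro continuous_intros)
    fix x :: real
    show "((\<lambda>t. exp (\<i> * of_real (t * real_of_int k)) / (\<i> * k)) has_vector_derivative exp (\<i> * of_real (x * real_of_int k)))
        (at x within {min (- pi) pi..max (- pi) pi})"
    proof -
      have "((\<lambda>z. exp (\<i> * (z * of_int k)) / (\<i> * k)) has_field_derivative exp (\<i> * (of_real x * of_int k))) (at (of_real x))"
        using False by (auto intro!: derivative_eq_intros simp: field_simps)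
      from has_vector_derivative_real_field[OF this] show ?thesis by simp
    qed
  qed
  also have "\<dots> = 0"
  proof -
    have "exp (\<i> * of_real (pi * real_of_int k)) = exp (\<i> * of_real (-pi * real_of_int k))"
    proof -
      have "exp (\<i> * of_real (pi * real_of_int k)) = exp (\<i> * of_real (-pi * real_of_int k)) * exp (\<i> * of_real (2*pi*real_of_int k))"
      proof -
        have "exp (\<i> * of_real (-pi * real_of_int k)) * exp (\<i> * of_real (2*pi*real_of_int k))
           = exp (\<i> * of_real (-pi * real_of_int k) + \<i> * of_real (2*pi*real_of_int k))"
          by (rule exp_add[symmetric])
        also have "\<i> * of_real (-pi * real_of_int k) + \<i> * of_real (2*pi*real_of_int k) = \<i> * of_real (pi * real_of_int k)"
          by (simp add: algebra_simps)
        finally show ?thesis by simp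
      qed
      moreover have "exp (\<i> * of_real (2*pi*real_of_int k)) = 1"
        using exp_integer_2pi[of "of_int k"] by (simp add: algebra_simps)
      ultimately show ?thesis by simp
    qed
    then show ?thesis by simp
  qed
  finally show ?thesis using False int_NN_cont(2)[OF c] by simp
qed



definition MM :: "('d::finite \<Rightarrow> real) measure" where "MM = Pi\<^sub>M UNIV (\<lambda>_. NN)"

definition ang :: "('d::finite \<Rightarrow> real) \<Rightarrow> int^'d \<Rightarrow> real" where
  "ang \<theta> z = (\<Sum>i\<in>UNIV. \<theta> i * real_of_int (z $ i))"

interpretation NNps: product_sigma_finite "\<lambda>_::'d::finite. NN"
  unfolding product_sigma_finite_def
  using NN_finite finite_measure.axioms(1) by blast

lemma NN_borel: "f \<in> borel_measurable borel \<Longrightarrow> f \<in> borel_measurable NN"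
  unfolding NN_def by (simp add: measurable_restrict_space1)

lemma int_exp_MM:
  "integral\<^sup>L (MM::('d::finite \<Rightarrow> real) measure) (\<lambda>\<theta>. \<Prod>i\<in>UNIV. exp (\<i> * of_real (\<theta> i * real_of_int (z $ i))))
     = (if z = 0 then of_real ((2*pi) ^ CARD('d)) else 0)"
proof -
  have "integral\<^sup>L (MM::('d \<Rightarrow> real) measure) (\<lambda>\<theta>. \<Prod>i\<in>UNIV. exp (\<i> * of_real (\<theta> i * real_of_int (z $ i))))
      = (\<Prod>i\<in>UNIV. integral\<^sup>L NN (\<lambda>t. exp (\<i> * of_real (t * real_of_int (z $ i)))))"
    unfolding MM_def
    by (rule NNps.product_integral_prod[where f="\<lambda>i t. exp (\<i> * of_real (t * real_of_int (z $ i)))"])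
       (auto intro!: int_NN_cont continuous_intros)
  also have "\<dots> = (\<Prod>i\<in>UNIV. (if z $ i = 0 then of_real (2*pi) else 0))"
    by (intro prod.cong refl) (rule int_exp_NN)
  also have "\<dots> = (if z = 0 then of_real ((2*pi) ^ CARD('d)) else 0)"
  proof (cases "z = 0")
    case True then show ?thesis by (simp add: card_UNIV_def)
  next
    case False
    then obtain i where "z $ i \<noteq> 0" by (metis vec_eq_iff zero_index)
    then show ?thesis using False by (auto intro: prod_zero)
  qed
  finally show ?thesis .
qed

lemma prod_exp_cis: "(\<Prod>i\<in>UNIV. exp (\<i> * of_real (\<theta> i * real_of_int (z $ i)))) = cis (ang \<theta> z)"
  unfolding ang_def cis_conv_exp
  by (simp add: exp_sum[symmetric] sum_distrib_left)

lemma int_cos_MM: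
  "integral\<^sup>L (MM::('d::finite \<Rightarrow> real) measure) (\<lambda>\<theta>. cos (ang \<theta> z))
     = (if z = 0 then (2*pi) ^ CARD('d) else 0)"
proof -
  have int: "integrable (MM::('d \<Rightarrow> real) measure) (\<lambda>\<theta>. \<Prod>i\<in>UNIV. exp (\<i> * of_real (\<theta> i * real_of_int (z $ i))))"
    unfolding MM_def
    by (rule NNps.product_integrable_prod) (auto intro!: int_NN_cont continuous_intros)
  have "integral\<^sup>L (MM::('d \<Rightarrow> real) measure) (\<lambda>\<theta>. cos (ang \<theta> z))
      = integral\<^sup>L MM (\<lambda>\<theta>. Re (\<Prod>i\<in>UNIV. exp (\<i> * of_real (\<theta> i * real_of_int (z $ i)))))"
    unfolding prod_exp_cis by simp
  also have "\<dots> = Re (integral\<^sup>L MM (\<lambda>\<theta>. \<Prod>i\<in>UNIV. exp (\<i> * of_real (\<theta> i * real_of_int (z $ i)))))"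
    by (rule integral_bounded_linear[OF bounded_linear_Re int])
  also have "\<dots> = (if z = 0 then (2*pi) ^ CARD('d) else 0)"
    by (simp only: int_exp_MM) (simp add: power_mult_distrib)
  finally show ?thesis .
qed



definition phi :: "('d::finite \<Rightarrow> real) \<Rightarrow> real" where
  "phi \<theta> = (\<Sum>i\<in>UNIV. cos (\<theta> i)) / real CARD('d)"

lemma space_MM: "space (MM::('d::finite \<Rightarrow> real) measure) = Pi\<^sub>E UNIV (\<lambda>_. {-pi..pi})"
  unfolding MM_def by (simp add: space_PiM)

lemma MM_finite: "finite_measure (MM::('d::finite \<Rightarrow> real) measure)"
proof (rule finite_measureI)
  have "emeasure (MM::('d \<Rightarrow> real) measure) (space MM) = (\<Prod>i\<in>(UNIV::'d set). emeasure NN {-pi..pi})"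
    unfolding space_MM unfolding MM_def
    by (rule NNps.emeasure_PiM) (auto simp: NN_def sets_restrict_space)
  also have "\<dots> \<noteq> \<infinity>"
    by (simp add: ennreal_prod_eq_top NN_def emeasure_restrict_space ennreal_power)
  finally show "emeasure (MM::('d \<Rightarrow> real) measure) (space MM) \<noteq> \<infinity>" .
qed

lemma meas_comp: "(\<lambda>\<theta>. \<theta> i) \<in> borel_measurable (MM::('d::finite \<Rightarrow> real) measure)"
  using measurable_component_singleton[of i UNIV "\<lambda>_. NN"]
  unfolding MM_def NN_def measurable_restrict_space2_iff by simp

lemma meas_phi[measurable]: "phi \<in> borel_measurable (MM::('d::finite \<Rightarrow> real) measure)"
proof -
  have [measurable]: "\<And>i. (\<lambda>\<theta>. \<theta> i) \<in> borel_measurable (MM::('d \<Rightarrow> real) measure)" by (rule meas_comp)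
  show ?thesis unfolding phi_def by measurable
qed

lemma meas_ang[measurable]: "(\<lambda>\<theta>. ang \<theta> z) \<in> borel_measurable (MM::('d::finite \<Rightarrow> real) measure)"
proof -
  have [measurable]: "\<And>i. (\<lambda>\<theta>. \<theta> i) \<in> borel_measurable (MM::('d \<Rightarrow> real) measure)" by (rule meas_comp)
  show ?thesis unfolding ang_def by measurable
qed

lemma integrable_MM_bounded:
  fixes f :: "('d::finite \<Rightarrow> real) \<Rightarrow> real"
  assumes "f \<in> borel_measurable MM" "\<And>\<theta>. \<bar>f \<theta>\<bar> \<le> B"
  shows "integrable MM f"
  using finite_measure.integrable_const_bound[OF MM_finite, of f B] assms by auto

lemma abs_phi_le: "\<bar>phi \<theta>\<bar> \<le> 1"
proof -
  have "\<bar>\<Sum>i\<in>(UNIV::'a set). cos (\<theta> i)\<bar> \<le> (\<Sum>i\<in>(UNIV::'a set). 1)"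
    by (rule order_trans[OF sum_abs]) (intro sum_mono, simp)
  then show ?thesis unfolding phi_def by (simp add: field_simps)
qed

lemma sum_nbrs:
  "(\<Sum>z\<in>lat_nbrs x. g z) = (\<Sum>i\<in>UNIV. g (x + axis i 1) + g (x - axis i 1))"
proof -
  have A: "lat_nbrs x = range (\<lambda>i. x + axis i 1) \<union> range (\<lambda>i. x - axis i 1)"
    unfolding lat_nbrs_def by auto
  have inj1: "inj (\<lambda>i. x + axis i (1::int))"
    by (rule injI) (metis add_left_cancel axis_eq_axis one_neq_zero)
  have inj2: "inj (\<lambda>i. x - axis i (1::int))"
    by (rule injI) (simp add: axis_eq_axis)
  have disj: "range (\<lambda>i. x + axis i 1) \<inter> range (\<lambda>i. x - axis i (1::int)) = {}"
  proof (rule ccontr)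
    assume "\<not> ?thesis"
    then obtain i j where "x + axis i 1 = x - axis j (1::int)" by auto
    then have "(x + axis i 1) $ i = (x - axis j 1) $ i" by simp
    then show False by (auto simp: axis_def split: if_splits)
  qed
  show ?thesis
    unfolding A
    by (subst sum.union_disjoint[OF finite_imageI finite_imageI disj])
       (simp_all add: sum.reindex inj1 inj2 sum.distrib)
qed

lemma card_nbrs: "card (lat_nbrs (x::int^'d)) = 2 * CARD('d)"
proof -
  have "real (card (lat_nbrs x)) = (\<Sum>z\<in>lat_nbrs x. (1::real))" by simp
  also have "\<dots> = (\<Sum>i\<in>(UNIV::'d set). 1 + 1)" by (rule sum_nbrs)
  also have "\<dots> = 2 * real CARD('d)" by simp
  finally show ?thesis by linarith
qed

lemma lat_nbrs_range: "lat_nbrs x = range (\<lambda>i. x + axis i 1) \<union> range (\<lambda>i. x - axis i 1)"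
  unfolding lat_nbrs_def by auto

lemma finite_nbrs: "finite (lat_nbrs (x::int^'d))"
  unfolding lat_nbrs_range by simp

lemma ang_diff: "ang \<theta> (u - v) = ang \<theta> u - ang \<theta> v"
  unfolding ang_def by (simp add: algebra_simps sum_subtractf)

lemma ang_add: "ang \<theta> (u + v) = ang \<theta> u + ang \<theta> v"
  unfolding ang_def by (simp add: algebra_simps sum.distrib)

lemma ang_axis: "ang \<theta> (axis i 1) = \<theta> i"
  unfolding ang_def axis_def by (simp add: if_distrib cong: if_cong)

lemma avg_cos:
  "(\<Sum>z\<in>lat_nbrs x. cos (ang \<theta> (y - z))) / (2 * real CARD('d)) = phi \<theta> * cos (ang \<theta> (y - (x::int^'d)))"
proof -
  let ?a = "ang \<theta> (y - x)"
  have "(\<Sum>z\<in>lat_nbrs x. cos (ang \<theta> (y - z))) = (\<Sum>i\<in>UNIV. cos (?a - \<theta> i) + cos (?a + \<theta> i))"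
    by (simp add: sum_nbrs ang_diff ang_add ang_axis algebra_simps)
  also have "\<dots> = (\<Sum>i\<in>UNIV. 2 * cos ?a * cos (\<theta> i))"
    by (simp add: cos_diff cos_add mult_ac)
  also have "\<dots> = 2 * real CARD('d) * (phi \<theta> * cos ?a)"
    by (simp add: phi_def sum_distrib_left[symmetric])
  finally show ?thesis by simp
qed

lemma srw_fourier:
  "(2*pi)^CARD('d) * srw_p n x y = integral\<^sup>L MM (\<lambda>\<theta>. phi \<theta> ^ n * cos (ang \<theta> (y - (x::int^'d::finite))))"
proof (induction n arbitrary: x)
  case 0
  then show ?case by (simp add: int_cos_MM)
next
  case (Suc n)
  have int: "integrable MM (\<lambda>\<theta>. phi \<theta> ^ n * cos (ang \<theta> (y - z)))" for z :: "int^'d"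
    by (rule integrable_MM_bounded[where B=1]) (auto simp: abs_mult power_abs abs_phi_le intro!: mult_le_one power_le_one)
  have "(2*pi)^CARD('d) * srw_p (Suc n) x y = (\<Sum>z\<in>lat_nbrs x. (2*pi)^CARD('d) * srw_p n z y) / (2 * real CARD('d))"
    by (simp add: sum_distrib_left)
  also have "\<dots> = (\<Sum>z\<in>lat_nbrs x. integral\<^sup>L MM (\<lambda>\<theta>. phi \<theta> ^ n * cos (ang \<theta> (y - z)))) / (2 * real CARD('d))"
    using Suc by simp
  also have "\<dots> = integral\<^sup>L MM (\<lambda>\<theta>. (\<Sum>z\<in>lat_nbrs x. phi \<theta> ^ n * cos (ang \<theta> (y - z))) / (2 * real CARD('d)))"
    by (simp add: Bochner_Integration.integral_sum[OF int])
  also have "\<dots> = integral\<^sup>L MM (\<lambda>\<theta>. phi \<theta> ^ Suc n * cos (ang \<theta> (y - x)))"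
  proof (intro Bochner_Integration.integral_cong refl)
    fix \<theta> :: "'d \<Rightarrow> real"
    have "(\<Sum>z\<in>lat_nbrs x. phi \<theta> ^ n * cos (ang \<theta> (y - z))) / (2 * real CARD('d))
        = phi \<theta> ^ n * ((\<Sum>z\<in>lat_nbrs x. cos (ang \<theta> (y - z))) / (2 * real CARD('d)))"
      by (simp add: sum_distrib_left)
    also have "\<dots> = phi \<theta> ^ Suc n * cos (ang \<theta> (y - x))"
      by (simp add: avg_cos)
    finally show "(\<Sum>z\<in>lat_nbrs x. phi \<theta> ^ n * cos (ang \<theta> (y - z))) / (2 * real CARD('d)) =
         phi \<theta> ^ Suc n * cos (ang \<theta> (y - x))" .
  qed
  finally show ?case .
qed



lemma cos_upper4: "cos (x::real) \<le> 1 - x^2/2 + x^4/24"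
proof -
  have main: "cos x \<le> 1 - x^2/2 + x^4/24" if "x > 0" for x :: real
  proof -
    obtain t where "cos x = (\<Sum>m<4. cos_coeff m * x ^ m) + (cos (t + 1/2 * real 4 * pi) / fact 4) * x ^ 4"
      using Maclaurin_cos_expansion2[OF \<open>x > 0\<close>, of 4] by auto
    moreover have "(\<Sum>m<4. cos_coeff m * x ^ m) = 1 - x^2/2"
    proof -
      have "{..<4::nat} = {0,1,2,3}" by auto
      then show ?thesis by (simp add: cos_coeff_def)
    qed
    moreover have "cos (t + 1/2 * real 4 * pi) / fact 4 * x ^ 4 \<le> x^4/24"
    proof -
      have "cos (t + 1/2 * real 4 * pi) * x^4 \<le> 1 * x^4"
        by (intro mult_right_mono) auto
      then show ?thesis by (simp add: fact_numeral)
    qed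
    ultimately show ?thesis by linarith
  qed
  show ?thesis
  proof (cases "x > 0")
    case True then show ?thesis by (rule main)
  next
    case False
    show ?thesis
    proof (cases "x = 0")
      case True then show ?thesis by simp
    next
      case False
      with \<open>\<not> x > 0\<close> have "-x > 0" by simp
      from main[OF this] show ?thesis by simp
    qed
  qed
qed

lemma cos_lower2: "1 - x^2/2 \<le> cos (x::real)"
proof -
  have main: "1 - x^2/2 \<le> cos x" if "x > 0" for x :: real
  proof -
    obtain t where "cos x = (\<Sum>m<2. cos_coeff m * x ^ m) + (cos (t + 1/2 * real 2 * pi) / fact 2) * x ^ 2"
      using Maclaurin_cos_expansion2[OF \<open>x > 0\<close>, of 2] by auto
    moreover have "(\<Sum>m<2. cos_coeff m * x ^ m) = 1"
    proof -
      have "{..<2::nat} = {0,1}" by auto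
      then show ?thesis by (simp add: cos_coeff_def)
    qed
    moreover have "cos (t + 1/2 * real 2 * pi) / fact 2 * x ^ 2 \<ge> - (x^2/2)"
    proof -
      have "-1 \<le> cos (t + 1/2 * real 2 * pi)" by simp
      then have "-1 * x^2 \<le> cos (t + 1/2 * real 2 * pi) * x^2"
        by (intro mult_right_mono) auto
      then show ?thesis by (simp add: fact_numeral)
    qed
    ultimately show ?thesis by linarith
  qed
  show ?thesis
  proof (cases "x > 0")
    case True then show ?thesis by (rule main)
  next
    case False
    show ?thesis
    proof (cases "x = 0")
      case True then show ?thesis by simp
    next
      case False
      with \<open>\<not> x > 0\<close> have "-x > 0" by simp
      from main[OF this] show ?thesis by simp
    qed
  qed
qed

lemma one_minus_cos_ge: "\<bar>x\<bar> \<le> pi \<Longrightarrow> x^2 / 12 \<le> 1 - cos (x::real)"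
proof -
  assume a: "\<bar>x\<bar> \<le> pi"
  have "x^2 \<le> pi^2" using a by (metis abs_le_square_iff abs_of_nonneg pi_ge_zero)
  also have "pi^2 < 10"
  proof -
    have "pi \<le> 3.15" using pi_approx by simp
    then have "pi * pi \<le> 3.15 * 3.15" by (intro mult_mono) auto
    then show ?thesis by (simp add: power2_eq_square)
  qed
  finally have "x^2 \<le> 10" by simp
  have "x^2/12 \<le> x^2/2 - x^4/24"
  proof -
    have "x^4 = x^2 * x^2" by algebra
    moreover have "x^2 * x^2 \<le> 10 * x^2" using \<open>x^2 \<le> 10\<close> by (intro mult_right_mono) auto
    ultimately have "x^4 \<le> 10 * x^2" by simp
    then show ?thesis by simp
  qed
  then show ?thesis using cos_upper4[of x] by linarith
qed

lemma one_minus_cos_le: "1 - cos (x::real) \<le> x^2 / 2"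
  using cos_lower2[of x] by linarith



definition nsq :: "('d::finite \<Rightarrow> real) \<Rightarrow> real" where
  "nsq \<theta> = (\<Sum>i\<in>UNIV. (\<theta> i)^2)"

lemma phi_gap:
  assumes "\<theta> \<in> space (MM::('d::finite \<Rightarrow> real) measure)"
  shows "nsq \<theta> / (12 * real CARD('d)) \<le> 1 - phi \<theta>"
proof -
  have b: "\<bar>\<theta> i\<bar> \<le> pi" for i
  proof -
    have "\<theta> i \<in> {-pi..pi}" using assms by (auto simp: space_MM PiE_iff)
    then show ?thesis by auto
  qed
  have "1 - phi \<theta> = (\<Sum>i\<in>(UNIV::'d set). 1 - cos (\<theta> i)) / real CARD('d)"
    by (simp add: phi_def sum_subtractf field_simps)
  moreover have "(\<Sum>i\<in>(UNIV::'d set). (\<theta> i)^2 / 12) \<le> (\<Sum>i\<in>(UNIV::'d set). 1 - cos (\<theta> i))"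
    by (intro sum_mono one_minus_cos_ge b)
  ultimately show ?thesis
    by (simp add: nsq_def sum_divide_distrib[symmetric] divide_right_mono field_simps)
qed

lemma nsq_nonneg: "0 \<le> nsq \<theta>"
  unfolding nsq_def by (intro sum_nonneg) auto

lemma ang_sq: "(ang \<theta> z)^2 \<le> nsq \<theta> * (\<Sum>i\<in>UNIV. (real_of_int (z $ i))^2)"
proof -
  let ?u = "(\<chi> i. \<theta> i) :: real^'a" and ?v = "(\<chi> i. real_of_int (z $ i)) :: real^'a"
  have "ang \<theta> z = inner ?u ?v" by (simp add: ang_def inner_vec_def)
  moreover have "inner ?u ?u = nsq \<theta>" by (simp add: inner_vec_def nsq_def power2_eq_square)
  moreover have "inner ?v ?v = (\<Sum>i\<in>UNIV. (real_of_int (z $ i))^2)" by (simp add: inner_vec_def power2_eq_square)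
  ultimately show ?thesis using Cauchy_Schwarz_ineq[of ?u ?v] by simp
qed

lemma null_coord:
  "AE \<theta> in (MM::('d::finite \<Rightarrow> real) measure). \<theta> i \<notin> {-pi, 0, pi}"
proof (rule AE_I')
  define A where "A = (\<lambda>j. if j = i then {-pi,0,pi} else {-pi..pi::real})"
  let ?N = "Pi\<^sub>E (UNIV::'d set) A"
  have A_sets: "A j \<in> sets NN" for j
    unfolding A_def NN_def by (auto simp: sets_restrict_space_iff)
  have sets: "?N \<in> sets (MM::('d \<Rightarrow> real) measure)"
    unfolding MM_def by (rule sets_PiM_I_finite) (simp_all add: A_sets)
  have "emeasure (MM::('d \<Rightarrow> real) measure) ?N = (\<Prod>j\<in>UNIV. emeasure NN (A j))"
    unfolding MM_def by (rule NNps.emeasure_PiM) (simp_all add: A_sets)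
  also have "\<dots> = 0"
  proof (rule prod_zero)
    have "emeasure NN {-pi,0,pi} = emeasure lborel {-pi,0,pi::real}"
      unfolding NN_def by (rule emeasure_restrict_space) auto
    also have "\<dots> = 0" by (rule emeasure_lborel_countable) simp
    finally show "\<exists>j\<in>UNIV. emeasure NN (A j) = 0"
      by (intro bexI[of _ i]) (simp_all add: A_def)
  qed simp
  finally show "?N \<in> null_sets MM" using sets by (simp add: null_sets_def)
  show "{\<theta> \<in> space MM. \<not> \<theta> i \<notin> {- pi, 0, pi}} \<subseteq> ?N"
  proof
    fix \<theta> assume "\<theta> \<in> {\<theta> \<in> space MM. \<not> \<theta> i \<notin> {- pi, 0, pi}}"
    then have h: "\<theta> \<in> Pi\<^sub>E UNIV (\<lambda>_. {-pi..pi})" "\<theta> i \<in> {-pi,0,pi}" by (auto simp: space_MM)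
    show "\<theta> \<in> ?N"
      unfolding PiE_iff
    proof (intro conjI ballI)
      fix j :: 'd
      show "\<theta> j \<in> A j"
      proof (cases "j = i")
        case True then show ?thesis using h(2) by (simp add: A_def)
      next
        case False then show ?thesis using h(1) by (simp add: A_def PiE_iff)
      qed
    next
      show "\<theta> \<in> extensional UNIV" by simp
    qed
  qed
qed

lemma AE_good: "AE \<theta> in (MM::('d::finite \<Rightarrow> real) measure). \<forall>i. \<theta> i \<notin> {-pi, 0, pi}"
proof -
  have "AE \<theta> in (MM::('d \<Rightarrow> real) measure). \<forall>i\<in>UNIV. \<theta> i \<notin> {-pi, 0, pi}"
    by (rule AE_finite_allI) (simp, rule null_coord)
  then show ?thesis by simp
qed

lemma abs_cos_lt1:
  assumes "\<bar>t\<bar> \<le> pi" "t \<notin> {-pi, 0, pi}"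
  shows "\<bar>cos t\<bar> < 1"
proof (rule ccontr)
  assume "\<not> \<bar>cos t\<bar> < 1"
  then have "\<bar>cos t\<bar> = 1" using abs_cos_le_one[of t] by linarith
  then have "(cos t)^2 = 1" by (metis power2_abs one_power2)
  then have "sin t = 0" using sin_cos_squared_add[of t] by simp
  then obtain k :: int where k: "t = of_int k * pi" using sin_zero_iff_int2 by blast
  then have "\<bar>real_of_int k\<bar> * pi \<le> 1 * pi" using assms(1) by (simp add: abs_mult)
  then have "\<bar>real_of_int k\<bar> \<le> 1" using pi_gt_zero by (simp only: mult_le_cancel_right)
  then have "\<bar>k\<bar> \<le> 1" by linarith
  then have "k = -1 \<or> k = 0 \<or> k = 1" by auto
  then show False using assms(2) k by auto
qed

lemma abs_phi_lt1:
  assumes "\<theta> \<in> space (MM::('d::finite \<Rightarrow> real) measure)" "\<theta> i \<notin> {-pi, 0, pi}"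
  shows "\<bar>phi \<theta>\<bar> < 1"
proof -
  have "\<theta> i \<in> {-pi..pi}" using assms(1) by (auto simp: space_MM PiE_iff)
  then have "\<bar>cos (\<theta> i)\<bar> < 1" using assms(2) by (intro abs_cos_lt1) auto
  then have "(\<Sum>j\<in>(UNIV::'d set). \<bar>cos (\<theta> j)\<bar>) < (\<Sum>j\<in>(UNIV::'d set). 1)"
    by (intro sum_strict_mono_ex1) auto
  moreover have "\<bar>\<Sum>j\<in>(UNIV::'d set). cos (\<theta> j)\<bar> \<le> (\<Sum>j\<in>(UNIV::'d set). \<bar>cos (\<theta> j)\<bar>)"
    by (rule sum_abs)
  moreover have "(\<Sum>j\<in>(UNIV::'d set). (1::real)) = real CARD('d)" by simp
  ultimately have lt: "\<bar>\<Sum>j\<in>(UNIV::'d set). cos (\<theta> j)\<bar> < real CARD('d)" by linarith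
  have "\<bar>phi \<theta>\<bar> = \<bar>\<Sum>j\<in>(UNIV::'d set). cos (\<theta> j)\<bar> / real CARD('d)"
    by (simp add: phi_def abs_divide)
  also have "\<dots> < 1" using lt by simp
  finally show ?thesis .
qed

lemma geo_bound:
  assumes "\<bar>p\<bar> \<le> 1" "p < (1::real)"
  shows "\<bar>\<Sum>k<n. p^k\<bar> \<le> 2 / (1 - p)"
proof -
  have "(\<Sum>k<n. p^k) = (1 - p^n) / (1 - p)" using assms by (simp add: sum_gp_strict)
  moreover have "\<bar>1 - p^n\<bar> \<le> 2"
  proof -
    have "\<bar>p^n\<bar> \<le> 1" using assms by (simp add: power_abs power_le_one)
    then show ?thesis by linarith
  qed
  moreover have pos: "1 - p > 0" using assms by simp
  ultimately have "\<bar>\<Sum>k<n. p^k\<bar> = \<bar>1 - p^n\<bar> / (1 - p)" by (simp add: abs_divide)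
  also have "\<dots> \<le> 2 / (1 - p)" using pos \<open>\<bar>1 - p^n\<bar> \<le> 2\<close> by (intro divide_right_mono) auto
  finally show ?thesis .
qed



lemma powr_abs_has_integral:
  assumes "0 < a" "a < (1::real)"
  shows "((\<lambda>t. \<bar>t\<bar> powr (-a)) has_integral (2 * (pi powr (1 - a) / (1 - a)))) {-pi..pi}"
proof -
  have h0: "((\<lambda>t. t powr (-a)) has_integral (pi powr (-a + 1) / (-a + 1))) {0..pi}"
    by (rule has_integral_powr_from_0) (use assms in auto)
  have h0': "((\<lambda>t. t powr (-a)) has_integral (pi powr (1 - a) / (1 - a))) {0..pi}"
    using h0 by (simp add: add.commute)
  have h1: "((\<lambda>t. \<bar>t\<bar> powr (-a)) has_integral (pi powr (1 - a) / (1 - a))) {0..pi}"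
    by (rule has_integral_eq[OF _ h0']) auto
  have h2: "((\<lambda>t. \<bar>t\<bar> powr (-a)) has_integral (pi powr (1 - a) / (1 - a))) {-pi..0}"
    using h1 has_integral_reflect_real[where f="\<lambda>t. \<bar>t\<bar> powr (-a)" and a=0 and b=pi] by simp
  have "((\<lambda>t. \<bar>t\<bar> powr (-a)) has_integral (pi powr (1 - a) / (1 - a) + pi powr (1 - a) / (1 - a))) {-pi..pi}"
    by (rule has_integral_combine[OF _ _ h2 h1]) auto
  then show ?thesis by simp
qed

lemma powr_abs_integrable_NN:
  assumes "0 < a" "a < (1::real)"
  shows "integrable NN (\<lambda>t. \<bar>t\<bar> powr (-a))"
proof -
  have "integrable lborel (\<lambda>t. indicator {-pi..pi} t *\<^sub>R (\<bar>t\<bar> powr (-a)))"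
  proof (rule integrableI_nonneg)
    show "(\<lambda>t. indicator {-pi..pi} t *\<^sub>R (\<bar>t\<bar> powr (-a))) \<in> borel_measurable lborel"
      by measurable
    show "AE x in lborel. 0 \<le> indicator {-pi..pi} x *\<^sub>R (\<bar>x\<bar> powr (-a))" by auto
    have "(\<integral>\<^sup>+ x. ennreal (indicator {-pi..pi} x *\<^sub>R (\<bar>x\<bar> powr (-a))) \<partial>lborel)
        = (\<integral>\<^sup>+ x. ennreal (\<bar>x\<bar> powr (-a)) * indicator {-pi..pi} x \<partial>lborel)"
      by (intro nn_integral_cong) (auto split: split_indicator)
    also have "\<dots> = ennreal (2 * (pi powr (1 - a) / (1 - a)))"
      by (rule nn_integral_has_integral_lebesgue'[OF _ powr_abs_has_integral[OF assms]]) auto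
    finally show "(\<integral>\<^sup>+ x. ennreal (indicator {-pi..pi} x *\<^sub>R (\<bar>x\<bar> powr (-a))) \<partial>lborel) < \<infinity>"
      by simp
  qed
  then show ?thesis unfolding NN_def by (subst integrable_restrict_space) auto
qed

definition HH :: "('d::finite \<Rightarrow> real) \<Rightarrow> real" where
  "HH \<theta> = (\<Prod>i\<in>UNIV. \<bar>\<theta> i\<bar> powr (- (2 / real CARD('d))))"

lemma HH_integrable:
  assumes "CARD('d::finite) \<ge> 3"
  shows "integrable (MM::('d \<Rightarrow> real) measure) HH"
proof -
  have a: "0 < 2 / real CARD('d)" "2 / real CARD('d) < 1" using assms by auto
  show ?thesis
    unfolding HH_def MM_def
    by (rule NNps.product_integrable_prod[where f="\<lambda>i t. \<bar>t\<bar> powr (- (2 / real CARD('d)))"])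
       (simp_all add: powr_abs_integrable_NN[OF a])
qed

lemma HH_bound:
  assumes "\<theta> \<in> space (MM::('d::finite \<Rightarrow> real) measure)" "\<forall>i. \<theta> i \<noteq> 0"
  shows "1 / nsq \<theta> \<le> HH \<theta>"
proof -
  define m where "m = Max (range (\<lambda>i. \<bar>\<theta> i\<bar>))"
  have "m \<in> range (\<lambda>i. \<bar>\<theta> i\<bar>)" unfolding m_def by (rule Max_in) auto
  then obtain i0 where i0: "m = \<bar>\<theta> i0\<bar>" by auto
  have le: "\<bar>\<theta> i\<bar> \<le> m" for i unfolding m_def by (rule Max_ge) auto
  have mpos: "m > 0" using i0 assms(2) by auto
  have "m^2 \<le> nsq \<theta>"
  proof -
    have "m^2 = (\<theta> i0)^2" using i0 by simp
    also have "\<dots> \<le> nsq \<theta>" unfolding nsq_def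
      by (rule member_le_sum) auto
    finally show ?thesis .
  qed
  moreover have "m^2 > 0" using mpos by simp
  ultimately have "nsq \<theta> > 0" by linarith
  have "1 / nsq \<theta> \<le> 1 / m^2" 
  proof (rule divide_left_mono)
    show "0 < nsq \<theta> * m^2" using \<open>m^2 > 0\<close> \<open>nsq \<theta> > 0\<close> by (rule mult_pos_pos[rotated])
  qed (use \<open>m^2 \<le> nsq \<theta>\<close> in auto)
  also have "1 / m^2 = (m powr (- (2 / real CARD('d)))) ^ CARD('d)"
  proof -
    have "(m powr (- (2 / real CARD('d)))) ^ CARD('d) = m powr (real CARD('d) * (- (2 / real CARD('d))))"
      using mpos by (simp only: powr_power)
    also have "real CARD('d) * (- (2 / real CARD('d))) = - 2" by simp
    also have "m powr (- 2) = inverse (m powr 2)" by (rule powr_minus)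
    also have "m powr 2 = m^2" using mpos by (simp add: powr_numeral)
    finally show ?thesis by (simp add: divide_inverse)
  qed
  also have "\<dots> = (\<Prod>i\<in>(UNIV::'d set). m powr (- (2 / real CARD('d))))"
    by simp
  also have "\<dots> \<le> HH \<theta>"
    unfolding HH_def
    by (intro prod_mono conjI powr_mono2') (use le assms(2) in auto)
  finally show ?thesis .
qed



lemma srw_nonneg: "0 \<le> srw_p k x y"
  by (induction k arbitrary: x) (auto intro!: sum_nonneg divide_nonneg_pos)

lemma integrable_fourier_term:
  "integrable (MM::('d::finite \<Rightarrow> real) measure) (\<lambda>\<theta>. phi \<theta> ^ k * cos (ang \<theta> z))"
  by (rule integrable_MM_bounded[where B=1])
     (auto simp: abs_mult power_abs abs_phi_le intro!: mult_le_one power_le_one)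

lemma partial_fourier:
  "(2*pi)^CARD('d) * (\<Sum>k<n. srw_p k x y) =
     integral\<^sup>L MM (\<lambda>\<theta>. cos (ang \<theta> (y - (x::int^'d::finite))) * (\<Sum>k<n. phi \<theta> ^ k))"
proof -
  have "(2*pi)^CARD('d) * (\<Sum>k<n. srw_p k x y) = (\<Sum>k<n. (2*pi)^CARD('d) * srw_p k x y)"
    by (simp add: sum_distrib_left)
  also have "\<dots> = (\<Sum>k<n. integral\<^sup>L MM (\<lambda>\<theta>. phi \<theta> ^ k * cos (ang \<theta> (y - x))))"
    by (intro sum.cong refl) (rule srw_fourier)
  also have "\<dots> = integral\<^sup>L MM (\<lambda>\<theta>. \<Sum>k<n. phi \<theta> ^ k * cos (ang \<theta> (y - x)))"
    by (rule Bochner_Integration.integral_sum[symmetric]) (rule integrable_fourier_term)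
  also have "\<dots> = integral\<^sup>L MM (\<lambda>\<theta>. cos (ang \<theta> (y - x)) * (\<Sum>k<n. phi \<theta> ^ k))"
    by (intro Bochner_Integration.integral_cong refl) (simp add: sum_distrib_right mult_ac)
  finally show ?thesis .
qed

lemma good_point:
  assumes "\<theta> \<in> space (MM::('d::finite \<Rightarrow> real) measure)" "\<forall>i. \<theta> i \<notin> {-pi, 0, pi}"
  shows "nsq \<theta> > 0" "phi \<theta> < 1" "\<bar>phi \<theta>\<bar> < 1"
    "2 / (1 - phi \<theta>) \<le> 24 * real CARD('d) / nsq \<theta>"
proof -
  obtain i :: 'd where True by simp
  have "0 < (\<theta> i)^2" using assms(2) by auto
  also have "(\<theta> i)^2 \<le> nsq \<theta>" unfolding nsq_def by (rule member_le_sum) auto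
  finally show np: "nsq \<theta> > 0" .
  show ab: "\<bar>phi \<theta>\<bar> < 1" using abs_phi_lt1[OF assms(1)] assms(2) by blast
  then show "phi \<theta> < 1" by simp
  have g: "nsq \<theta> / (12 * real CARD('d)) \<le> 1 - phi \<theta>" by (rule phi_gap[OF assms(1)])
  have gp: "0 < nsq \<theta> / (12 * real CARD('d))" using np by simp
  have "2 / (1 - phi \<theta>) \<le> 2 / (nsq \<theta> / (12 * real CARD('d)))"
  proof (rule divide_left_mono[OF g])
    have "0 < 1 - phi \<theta>" using gp g by linarith
    then show "0 < (1 - phi \<theta>) * (nsq \<theta> / (12 * real CARD('d)))" using gp by (rule mult_pos_pos)
  qed simp
  also have "\<dots> = 24 * real CARD('d) / nsq \<theta>" by simp
  finally show "2 / (1 - phi \<theta>) \<le> 24 * real CARD('d) / nsq \<theta>" .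
qed

lemma summable_srw:
  assumes "CARD('d::finite) \<ge> 3"
  shows "summable (\<lambda>k. srw_p k x (y::int^'d))"
proof (rule summableI_nonneg_bounded)
  show "0 \<le> srw_p k x y" for k by (rule srw_nonneg)
  fix n
  let ?B = "integral\<^sup>L (MM::('d \<Rightarrow> real) measure) (\<lambda>\<theta>. 24 * real CARD('d) * HH \<theta>)"
  have cpos: "(2*pi)^CARD('d) > 0" by simp
  have "(2*pi)^CARD('d) * (\<Sum>k<n. srw_p k x y) \<le> ?B"
    unfolding partial_fourier
  proof (rule integral_mono_AE')
    show "integrable (MM::('d \<Rightarrow> real) measure) (\<lambda>\<theta>. 24 * real CARD('d) * HH \<theta>)"
      by (intro integrable_mult_right HH_integrable[OF assms])
    show "AE \<theta> in (MM::('d \<Rightarrow> real) measure). 0 \<le> 24 * real CARD('d) * HH \<theta>"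
      by (rule AE_I2) (simp add: HH_def prod_nonneg)
    show "AE \<theta> in (MM::('d \<Rightarrow> real) measure). cos (ang \<theta> (y - x)) * (\<Sum>k<n. phi \<theta> ^ k) \<le> 24 * real CARD('d) * HH \<theta>"
    proof (rule AE_mp[OF AE_good], rule AE_I2, rule impI)
      fix \<theta> :: "'d \<Rightarrow> real"
      assume sp: "\<theta> \<in> space (MM::('d \<Rightarrow> real) measure)" and gd: "\<forall>i. \<theta> i \<notin> {-pi, 0, pi}"
      note G = good_point[OF sp gd]
      have "cos (ang \<theta> (y - x)) * (\<Sum>k<n. phi \<theta> ^ k) \<le> \<bar>\<Sum>k<n. phi \<theta> ^ k\<bar>"
      proof -
        have "cos (ang \<theta> (y - x)) * (\<Sum>k<n. phi \<theta> ^ k) \<le> \<bar>cos (ang \<theta> (y - x)) * (\<Sum>k<n. phi \<theta> ^ k)\<bar>" by simp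
        also have "\<dots> \<le> 1 * \<bar>\<Sum>k<n. phi \<theta> ^ k\<bar>" unfolding abs_mult by (intro mult_right_mono) auto
        finally show ?thesis by simp
      qed
      also have "\<dots> \<le> 2 / (1 - phi \<theta>)" using G(2) abs_phi_le by (intro geo_bound) auto
      also have "\<dots> \<le> 24 * real CARD('d) / nsq \<theta>" by (rule G(4))
      also have "\<dots> = 24 * real CARD('d) * (1 / nsq \<theta>)" by simp
      also have "\<dots> \<le> 24 * real CARD('d) * HH \<theta>"
        by (intro mult_left_mono HH_bound[OF sp]) (use gd in auto)
      finally show "cos (ang \<theta> (y - x)) * (\<Sum>k<n. phi \<theta> ^ k) \<le> 24 * real CARD('d) * HH \<theta>" .
    qed
  qed
  then show "(\<Sum>k<n. srw_p k x y) \<le> ?B / (2*pi)^CARD('d)"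
    using cpos by (simp add: field_simps)
qed

lemma green_lap:
  assumes "CARD('d::finite) \<ge> 3"
  shows "(\<Sum>z\<in>lat_nbrs x. green_fn z y) / (2 * real CARD('d)) - green_fn x (y::int^'d)
          = - (if x = y then 1 else 0)"
proof -
  have s: "summable (\<lambda>k. srw_p k z y)" for z by (rule summable_srw[OF assms])
  have "green_fn x y = srw_p 0 x y + (\<Sum>k. srw_p (Suc k) x y)"
    unfolding green_fn_def using suminf_split_head[OF s[of x]] by simp
  also have "(\<Sum>k. srw_p (Suc k) x y) = (\<Sum>k. (\<Sum>z\<in>lat_nbrs x. srw_p k z y) / (2 * real CARD('d)))"
    by simp
  also have "\<dots> = (\<Sum>k. (\<Sum>z\<in>lat_nbrs x. srw_p k z y)) / (2 * real CARD('d))"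
    by (rule suminf_divide) (intro summable_sum s)
  also have "(\<Sum>k. (\<Sum>z\<in>lat_nbrs x. srw_p k z y)) = (\<Sum>z\<in>lat_nbrs x. green_fn z y)"
    unfolding green_fn_def by (rule suminf_sum) (rule s)
  finally show ?thesis by simp
qed



lemma gap_bound:
  assumes "\<theta> \<in> space (MM::('d::finite \<Rightarrow> real) measure)" "nsq \<theta> > 0"
  shows "phi \<theta> < 1" "2 / (1 - phi \<theta>) \<le> 24 * real CARD('d) / nsq \<theta>"
proof -
  have g: "nsq \<theta> / (12 * real CARD('d)) \<le> 1 - phi \<theta>" by (rule phi_gap[OF assms(1)])
  have gp: "0 < nsq \<theta> / (12 * real CARD('d))" using assms(2) by simp
  show "phi \<theta> < 1" using g gp by linarith
  have "2 / (1 - phi \<theta>) \<le> 2 / (nsq \<theta> / (12 * real CARD('d)))"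
  proof (rule divide_left_mono[OF g])
    have "0 < 1 - phi \<theta>" using gp g by linarith
    then show "0 < (1 - phi \<theta>) * (nsq \<theta> / (12 * real CARD('d)))" using gp by (rule mult_pos_pos)
  qed simp
  also have "\<dots> = 24 * real CARD('d) / nsq \<theta>" by simp
  finally show "2 / (1 - phi \<theta>) \<le> 24 * real CARD('d) / nsq \<theta>" .
qed

lemma srw_tendsto0: "(\<lambda>n. srw_p n x (y::int^'d::finite)) \<longlonglongrightarrow> 0"
proof -
  let ?s = "\<lambda>n \<theta>. phi \<theta> ^ n * cos (ang \<theta> (y - x))"
  have "(\<lambda>n. integral\<^sup>L (MM::('d \<Rightarrow> real) measure) (?s n)) \<longlonglongrightarrow> integral\<^sup>L (MM::('d \<Rightarrow> real) measure) (\<lambda>_. 0::real)"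
  proof (rule integral_dominated_convergence[where w="\<lambda>_. 1"])
    show "(\<lambda>_. 0::real) \<in> borel_measurable (MM::('d \<Rightarrow> real) measure)" by simp
    show "?s n \<in> borel_measurable (MM::('d \<Rightarrow> real) measure)" for n by measurable
    show "integrable (MM::('d \<Rightarrow> real) measure) (\<lambda>_. 1::real)"
      by (rule finite_measure.integrable_const[OF MM_finite])
    show "AE \<theta> in (MM::('d \<Rightarrow> real) measure). norm (?s n \<theta>) \<le> 1" for n
      by (rule AE_I2) (auto simp: abs_mult power_abs abs_phi_le intro!: mult_le_one power_le_one)
    show "AE \<theta> in (MM::('d \<Rightarrow> real) measure). (\<lambda>n. ?s n \<theta>) \<longlonglongrightarrow> 0"
    proof (rule AE_mp[OF AE_good], rule AE_I2, rule impI)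
      fix \<theta> :: "'d \<Rightarrow> real"
      assume sp: "\<theta> \<in> space (MM::('d \<Rightarrow> real) measure)" and gd: "\<forall>i. \<theta> i \<notin> {-pi, 0, pi}"
      have "\<bar>phi \<theta>\<bar> < 1" by (rule good_point(3)[OF sp gd])
      then have "(\<lambda>n. phi \<theta> ^ n) \<longlonglongrightarrow> 0" by (intro LIMSEQ_power_zero) simp
      then show "(\<lambda>n. ?s n \<theta>) \<longlonglongrightarrow> 0" by (rule tendsto_mult_left_zero)
    qed
  qed
  moreover have "integral\<^sup>L (MM::('d \<Rightarrow> real) measure) (?s n) = (2*pi)^CARD('d) * srw_p n x y" for n
    by (rule srw_fourier[symmetric])
  ultimately have "(\<lambda>n. (2*pi)^CARD('d) * srw_p n x y) \<longlonglongrightarrow> 0" by simp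
  then have "(\<lambda>n. (2*pi)^CARD('d) * srw_p n x y / (2*pi)^CARD('d)) \<longlonglongrightarrow> 0 / (2*pi)^CARD('d)"
    by (rule tendsto_divide[OF _ tendsto_const]) simp_all
  then show ?thesis by simp
qed

lemma ang_zero_vec: "ang \<theta> 0 = 0"
  unfolding ang_def by simp

lemma ang_zero_theta: "nsq \<theta> = 0 \<Longrightarrow> ang \<theta> z = 0"
proof -
  assume "nsq \<theta> = 0"
  then have "\<forall>i\<in>UNIV. (\<theta> i)^2 = 0" unfolding nsq_def by (subst sum_nonneg_eq_0_iff[symmetric]) auto
  then show ?thesis unfolding ang_def by simp
qed

lemma exp_visits_fourier:
  "(2*pi)^CARD('d) * (exp_visits n x x - exp_visits n x y) =
     integral\<^sup>L MM (\<lambda>\<theta>. (1 - cos (ang \<theta> (y - (x::int^'d::finite)))) * (\<Sum>k<Suc n. phi \<theta> ^ k))"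
proof -
  have ev: "exp_visits n u v = (\<Sum>k<Suc n. srw_p k u v)" for u v :: "int^'d"
    unfolding exp_visits_def by (simp add: lessThan_Suc_atMost)
  have int: "integrable (MM::('d \<Rightarrow> real) measure) (\<lambda>\<theta>. cos (ang \<theta> z) * (\<Sum>k<Suc n. phi \<theta> ^ k))" for z
  proof (rule integrable_MM_bounded[where B="real (Suc n)"])
    show "(\<lambda>\<theta>. cos (ang \<theta> z) * (\<Sum>k<Suc n. phi \<theta> ^ k)) \<in> borel_measurable (MM::('d \<Rightarrow> real) measure)" by measurable
    fix \<theta> :: "'d \<Rightarrow> real"
    have "\<bar>\<Sum>k<Suc n. phi \<theta> ^ k\<bar> \<le> (\<Sum>k<Suc n. \<bar>phi \<theta> ^ k\<bar>)" by (rule sum_abs)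
    also have "\<dots> \<le> (\<Sum>k<Suc n. (1::real))"
      by (intro sum_mono) (simp add: power_abs abs_phi_le power_le_one)
    finally have S: "\<bar>\<Sum>k<Suc n. phi \<theta> ^ k\<bar> \<le> real (Suc n)" by simp
    have "\<bar>cos (ang \<theta> z) * (\<Sum>k<Suc n. phi \<theta> ^ k)\<bar> \<le> 1 * \<bar>\<Sum>k<Suc n. phi \<theta> ^ k\<bar>"
      unfolding abs_mult by (intro mult_right_mono) auto
    then show "\<bar>cos (ang \<theta> z) * (\<Sum>k<Suc n. phi \<theta> ^ k)\<bar> \<le> real (Suc n)" using S by simp
  qed
  have "(2*pi)^CARD('d) * (exp_visits n x x - exp_visits n x y) =
     (2*pi)^CARD('d) * (\<Sum>k<Suc n. srw_p k x x) - (2*pi)^CARD('d) * (\<Sum>k<Suc n. srw_p k x y)"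
    by (simp add: ev right_diff_distrib)
  also have "\<dots> = integral\<^sup>L MM (\<lambda>\<theta>. cos (ang \<theta> (x - x)) * (\<Sum>k<Suc n. phi \<theta> ^ k))
       - integral\<^sup>L MM (\<lambda>\<theta>. cos (ang \<theta> (y - x)) * (\<Sum>k<Suc n. phi \<theta> ^ k))"
    by (simp only: partial_fourier)
  also have "\<dots> = integral\<^sup>L MM (\<lambda>\<theta>. cos (ang \<theta> (x - x)) * (\<Sum>k<Suc n. phi \<theta> ^ k)
       - cos (ang \<theta> (y - x)) * (\<Sum>k<Suc n. phi \<theta> ^ k))"
    by (rule Bochner_Integration.integral_diff[symmetric]) (rule int)+
  also have "\<dots> = integral\<^sup>L MM (\<lambda>\<theta>. (1 - cos (ang \<theta> (y - x))) * (\<Sum>k<Suc n. phi \<theta> ^ k))"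
    by (intro Bochner_Integration.integral_cong refl) (simp add: ang_zero_vec left_diff_distrib)
  finally show ?thesis .
qed

lemma pot_convergent:
  "convergent (\<lambda>n. exp_visits n x x - exp_visits n x (y::int^'d::finite))"
proof -
  define z where "z = y - x"
  define Zs where "Zs = (\<Sum>i\<in>(UNIV::'d set). (real_of_int (z $ i))^2)"
  have Zs: "0 \<le> Zs" unfolding Zs_def by (intro sum_nonneg) auto
  let ?s = "\<lambda>n \<theta>. (1 - cos (ang \<theta> z)) * (\<Sum>k<n. phi \<theta> ^ k)"
  let ?f = "\<lambda>\<theta>. (1 - cos (ang \<theta> z)) / (1 - phi \<theta>)"
  have "(\<lambda>n. integral\<^sup>L (MM::('d \<Rightarrow> real) measure) (?s n)) \<longlonglongrightarrow> integral\<^sup>L MM ?f"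
  proof (rule integral_dominated_convergence[where w="\<lambda>_. 12 * real CARD('d) * Zs"])
    show "?f \<in> borel_measurable (MM::('d \<Rightarrow> real) measure)" by measurable
    show "?s n \<in> borel_measurable (MM::('d \<Rightarrow> real) measure)" for n by measurable
    show "integrable (MM::('d \<Rightarrow> real) measure) (\<lambda>_. 12 * real CARD('d) * Zs)"
      by (rule finite_measure.integrable_const[OF MM_finite])
    show "AE \<theta> in (MM::('d \<Rightarrow> real) measure). norm (?s n \<theta>) \<le> 12 * real CARD('d) * Zs" for n
    proof (rule AE_I2)
      fix \<theta> :: "'d \<Rightarrow> real"
      assume sp: "\<theta> \<in> space (MM::('d \<Rightarrow> real) measure)"
      show "norm (?s n \<theta>) \<le> 12 * real CARD('d) * Zs"
      proof (cases "nsq \<theta> = 0")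
        case True
        then show ?thesis using Zs by (simp add: ang_zero_theta)
      next
        case False
        then have np: "nsq \<theta> > 0" using nsq_nonneg[of \<theta>] by simp
        note G = gap_bound[OF sp np]
        have c1: "\<bar>1 - cos (ang \<theta> z)\<bar> \<le> nsq \<theta> * Zs / 2"
        proof -
          have "\<bar>1 - cos (ang \<theta> z)\<bar> = 1 - cos (ang \<theta> z)" by simp
          also have "\<dots> \<le> (ang \<theta> z)^2 / 2" by (rule one_minus_cos_le)
          also have "\<dots> \<le> nsq \<theta> * Zs / 2" using ang_sq[of \<theta> z] unfolding Zs_def by simp
          finally show ?thesis .
        qed
        have c2: "\<bar>\<Sum>k<n. phi \<theta> ^ k\<bar> \<le> 24 * real CARD('d) / nsq \<theta>"
          using geo_bound[OF abs_phi_le G(1), of n] G(2) by linarith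
        have "norm (?s n \<theta>) = \<bar>1 - cos (ang \<theta> z)\<bar> * \<bar>\<Sum>k<n. phi \<theta> ^ k\<bar>"
          by (simp add: abs_mult)
        also have "\<dots> \<le> (nsq \<theta> * Zs / 2) * (24 * real CARD('d) / nsq \<theta>)"
          using nsq_nonneg[of \<theta>] Zs by (intro mult_mono c1 c2) auto
        also have "\<dots> = 12 * real CARD('d) * Zs" using np by (simp add: field_simps)
        finally show ?thesis .
      qed
    qed
    show "AE \<theta> in (MM::('d \<Rightarrow> real) measure). (\<lambda>n. ?s n \<theta>) \<longlonglongrightarrow> ?f \<theta>"
    proof (rule AE_mp[OF AE_good], rule AE_I2, rule impI)
      fix \<theta> :: "'d \<Rightarrow> real"
      assume sp: "\<theta> \<in> space (MM::('d \<Rightarrow> real) measure)" and gd: "\<forall>i. \<theta> i \<notin> {-pi, 0, pi}"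
      have "\<bar>phi \<theta>\<bar> < 1" by (rule good_point(3)[OF sp gd])
      then have "(\<lambda>k. phi \<theta> ^ k) sums (1 / (1 - phi \<theta>))" by (intro geometric_sums) simp
      then have "(\<lambda>n. \<Sum>k<n. phi \<theta> ^ k) \<longlonglongrightarrow> 1 / (1 - phi \<theta>)" by (simp add: sums_def)
      then have "(\<lambda>n. ?s n \<theta>) \<longlonglongrightarrow> (1 - cos (ang \<theta> z)) * (1 / (1 - phi \<theta>))"
        by (intro tendsto_mult tendsto_const)
      then show "(\<lambda>n. ?s n \<theta>) \<longlonglongrightarrow> ?f \<theta>" by simp
    qed
  qed
  then have "(\<lambda>n. integral\<^sup>L (MM::('d \<Rightarrow> real) measure) (?s (Suc n))) \<longlonglongrightarrow> integral\<^sup>L MM ?f"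
    by (rule LIMSEQ_Suc)
  then have "(\<lambda>n. (2*pi)^CARD('d) * (exp_visits n x x - exp_visits n x y)) \<longlonglongrightarrow> integral\<^sup>L MM ?f"
    unfolding exp_visits_fourier z_def .
  then have "(\<lambda>n. (2*pi)^CARD('d) * (exp_visits n x x - exp_visits n x y) / (2*pi)^CARD('d))
      \<longlonglongrightarrow> integral\<^sup>L MM ?f / (2*pi)^CARD('d)"
    by (rule tendsto_divide[OF _ tendsto_const]) simp_all
  then show ?thesis unfolding convergent_def by auto
qed



lemma srw_diag:
  fixes x z :: "int^'d::finite"
  shows "srw_p k x x = srw_p k z z"
proof -
  have "(2*pi)^CARD('d) * srw_p k x x = (2*pi)^CARD('d) * srw_p k z z"
    using srw_fourier[of k x x] srw_fourier[of k z z] by simp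
  then show ?thesis by simp
qed

lemma ev_diag:
  fixes x z :: "int^'d::finite"
  shows "exp_visits n x x = exp_visits n z z"
  unfolding exp_visits_def using srw_diag[of _ x z] by simp

lemma ev_Suc: "exp_visits (Suc n) x y =
   (if x = y then 1 else 0) + (\<Sum>z\<in>lat_nbrs x. exp_visits n z y) / (2 * real CARD('d))"
  for x y :: "int^'d::finite"
proof -
  have "exp_visits (Suc n) x y = srw_p 0 x y + (\<Sum>k\<le>n. srw_p (Suc k) x y)"
    unfolding exp_visits_def by (simp only: sum.atMost_Suc_shift)
  also have "(\<Sum>k\<le>n. srw_p (Suc k) x y) = (\<Sum>k\<le>n. \<Sum>z\<in>lat_nbrs x. srw_p k z y) / (2 * real CARD('d))"
    by (simp add: sum_divide_distrib)
  also have "(\<Sum>k\<le>n. \<Sum>z\<in>lat_nbrs x. srw_p k z y) = (\<Sum>z\<in>lat_nbrs x. exp_visits n z y)"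
    unfolding exp_visits_def by (rule sum.swap)
  finally show ?thesis by simp
qed

lemma pot_lap:
  "(\<Sum>z\<in>lat_nbrs x. pot_kernel z y) / (2 * real CARD('d)) - pot_kernel x y = (if x = y then 1 else 0)"
  for x y :: "int^'d::finite"
proof -
  define a where "a = (\<lambda>n w. exp_visits n w w - exp_visits n w y)"
  have conv: "(\<lambda>n. a n w) \<longlonglongrightarrow> pot_kernel w y" for w
    unfolding a_def pot_kernel_def using pot_convergent[of w y] by (simp add: convergent_LIMSEQ_iff)
  have d: "real CARD('d) > 0" by simp
  have eq: "(\<Sum>z\<in>lat_nbrs x. a n z) / (2 * real CARD('d)) - a n x = (if x = y then 1 else 0) - srw_p (Suc n) x y" for n
  proof -
    let ?D = "2 * real CARD('d)"
    have c: "exp_visits n z z = exp_visits n x x" for z :: "int^'d" by (rule ev_diag)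
    have "(\<Sum>z\<in>lat_nbrs x. a n z) = (\<Sum>z\<in>lat_nbrs x. exp_visits n x x - exp_visits n z y)"
      unfolding a_def
    proof (intro sum.cong refl)
      fix z assume "z \<in> lat_nbrs x"
      show "exp_visits n z z - exp_visits n z y = exp_visits n x x - exp_visits n z y"
        using c[of z] by simp
    qed
    also have "\<dots> = (\<Sum>z\<in>lat_nbrs x. exp_visits n x x) - (\<Sum>z\<in>lat_nbrs x. exp_visits n z y)"
      by (rule sum_subtractf)
    also have "(\<Sum>z\<in>lat_nbrs x. exp_visits n x x) = ?D * exp_visits n x x"
      by (simp add: card_nbrs)
    finally have s1: "(\<Sum>z\<in>lat_nbrs x. a n z) / ?D = exp_visits n x x - (\<Sum>z\<in>lat_nbrs x. exp_visits n z y) / ?D"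
      using d by (simp add: diff_divide_distrib)
    have s2: "(\<Sum>z\<in>lat_nbrs x. exp_visits n z y) / ?D = exp_visits (Suc n) x y - (if x = y then 1 else 0)"
      using ev_Suc[of n x y] by simp
    have s3: "exp_visits (Suc n) x y = exp_visits n x y + srw_p (Suc n) x y"
      unfolding exp_visits_def by simp
    show ?thesis unfolding s1 s2 s3 unfolding a_def by simp
  qed
  have "(\<lambda>n. (\<Sum>z\<in>lat_nbrs x. a n z) / (2 * real CARD('d)) - a n x) \<longlonglongrightarrow>
      (\<Sum>z\<in>lat_nbrs x. pot_kernel z y) / (2 * real CARD('d)) - pot_kernel x y"
    by (intro tendsto_intros conv) simp_all
  moreover have "(\<lambda>n. (\<Sum>z\<in>lat_nbrs x. a n z) / (2 * real CARD('d)) - a n x) \<longlonglongrightarrow> (if x = y then 1 else 0) - 0"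
    unfolding eq by (intro tendsto_intros LIMSEQ_Suc[OF srw_tendsto0])
  ultimately have "(\<Sum>z\<in>lat_nbrs x. pot_kernel z y) / (2 * real CARD('d)) - pot_kernel x y = (if x = y then 1 else 0) - 0"
    by (rule LIMSEQ_unique)
  then show ?thesis by simp
qed

lemma disc_lap_alt: "disc_lap \<xi> f x = ((\<Sum>z\<in>lat_nbrs x. f z) / (2 * real CARD('d)) - f (x::int^'d::finite)) / \<xi>^2"
proof -
  have d: "real CARD('d) > 0" by simp
  have "(\<Sum>z\<in>lat_nbrs x. f z - f x) = (\<Sum>z\<in>lat_nbrs x. f z) - 2 * real CARD('d) * f x"
    by (simp add: sum_subtractf card_nbrs)
  then show ?thesis unfolding disc_lap_def using d by (simp add: field_simps)
qed

lemma g_lap: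
  fixes x y :: "int^'d::finite"
  assumes "\<xi> > 0" "CARD('d) \<ge> 2"
  shows "disc_lap \<xi> (\<lambda>x. g_xi \<xi> x y) x = - (if x = y then 1 else 0) / \<xi> ^ CARD('d)"
proof -
  let ?D = "2 * real CARD('d)"
  have D: "?D \<noteq> 0" by simp
  have avg: "(\<Sum>z\<in>lat_nbrs x. a * f z + b) / ?D - (a * f x + b) = a * ((\<Sum>z\<in>lat_nbrs x. f z) / ?D - f x)"
    for a b :: real and f :: "int^'d \<Rightarrow> real"
  proof -
    have "(\<Sum>z\<in>lat_nbrs x. a * f z + b) = a * (\<Sum>z\<in>lat_nbrs x. f z) + ?D * b"
      by (simp add: sum.distrib sum_distrib_left card_nbrs)
    then have "(\<Sum>z\<in>lat_nbrs x. a * f z + b) / ?D = a * ((\<Sum>z\<in>lat_nbrs x. f z) / ?D) + b"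
      using D by (simp add: add_divide_distrib)
    then show ?thesis by (simp add: right_diff_distrib)
  qed
  show ?thesis
  proof (cases "CARD('d) = 2")
    case True
    have g: "g_xi \<xi> z y = (-1) * pot_kernel z y + 2 / pi * ln \<xi>" for z
      unfolding g_xi_def using True by simp
    have "disc_lap \<xi> (\<lambda>x. g_xi \<xi> x y) x = (- 1 * ((\<Sum>z\<in>lat_nbrs x. pot_kernel z y) / ?D - pot_kernel x y)) / \<xi>^2"
      unfolding disc_lap_alt g using avg[of "-1" "\<lambda>z. pot_kernel z y" "2 / pi * ln \<xi>"] by (rule arg_cong[where f="\<lambda>t. t / \<xi>^2"])
    also have "\<dots> = - (if x = y then 1 else 0) / \<xi>^2" by (simp only: pot_lap)
    finally show ?thesis using True by simp
  next
    case False
    then have d3: "CARD('d) \<ge> 3" using assms(2) by simp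
    have g: "g_xi \<xi> z y = \<xi> powr (2 - real CARD('d)) * green_fn z y + 0" for z
      unfolding g_xi_def using False by simp
    have p: "\<xi> powr (2 - real CARD('d)) / \<xi>^2 = 1 / \<xi> ^ CARD('d)"
    proof -
      have "\<xi> powr (2 - real CARD('d)) = \<xi> powr 2 / \<xi> powr (real CARD('d))" by (rule powr_diff)
      also have "\<dots> = \<xi>^2 / \<xi> ^ CARD('d)" using assms(1) by (simp add: powr_realpow)
      finally show ?thesis using assms(1) by simp
    qed
    have "disc_lap \<xi> (\<lambda>x. g_xi \<xi> x y) x = (\<xi> powr (2 - real CARD('d)) * ((\<Sum>z\<in>lat_nbrs x. green_fn z y) / ?D - green_fn x y)) / \<xi>^2"
      unfolding disc_lap_alt g using avg[of "\<xi> powr (2 - real CARD('d))" "\<lambda>z. green_fn z y" 0] by (rule arg_cong[where f="\<lambda>t. t / \<xi>^2"])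
    also have "\<dots> = (\<xi> powr (2 - real CARD('d)) / \<xi>^2) * (- (if x = y then 1 else 0))"
      by (simp only: green_lap[OF d3]) simp
    also have "\<dots> = - (if x = y then 1 else 0) / \<xi> ^ CARD('d)" unfolding p by simp
    finally show ?thesis .
  qed
qed

lemma disc_lap_linear:
  assumes "finite S"
  shows "disc_lap \<xi> (\<lambda>x. c * (\<Sum>y\<in>S. h x y * m y)) x = c * (\<Sum>y\<in>S. m y * disc_lap \<xi> (\<lambda>x. h x y) x)"
proof -
  have "(\<Sum>z\<in>lat_nbrs x. c * (\<Sum>y\<in>S. h z y * m y) - c * (\<Sum>y\<in>S. h x y * m y))
      = (\<Sum>z\<in>lat_nbrs x. c * (\<Sum>y\<in>S. m y * (h z y - h x y)))"
  proof (intro sum.cong refl)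
    fix z
    have "(\<Sum>y\<in>S. m y * (h z y - h x y)) = (\<Sum>y\<in>S. h z y * m y - h x y * m y)"
      by (intro sum.cong refl) (simp add: algebra_simps)
    also have "\<dots> = (\<Sum>y\<in>S. h z y * m y) - (\<Sum>y\<in>S. h x y * m y)" by (rule sum_subtractf)
    finally show "c * (\<Sum>y\<in>S. h z y * m y) - c * (\<Sum>y\<in>S. h x y * m y) = c * (\<Sum>y\<in>S. m y * (h z y - h x y))"
      by (simp add: right_diff_distrib)
  qed
  also have "\<dots> = c * (\<Sum>z\<in>lat_nbrs x. \<Sum>y\<in>S. m y * (h z y - h x y))"
    by (simp add: sum_distrib_left)
  also have "(\<Sum>z\<in>lat_nbrs x. \<Sum>y\<in>S. m y * (h z y - h x y)) = (\<Sum>y\<in>S. \<Sum>z\<in>lat_nbrs x. m y * (h z y - h x y))"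
    by (rule sum.swap)
  also have "\<dots> = (\<Sum>y\<in>S. m y * (\<Sum>z\<in>lat_nbrs x. h z y - h x y))"
    by (simp add: sum_distrib_left)
  finally have e: "(\<Sum>z\<in>lat_nbrs x. c * (\<Sum>y\<in>S. h z y * m y) - c * (\<Sum>y\<in>S. h x y * m y))
      = c * (\<Sum>y\<in>S. m y * (\<Sum>z\<in>lat_nbrs x. h z y - h x y))" .
  show ?thesis unfolding disc_lap_def e
    by (simp add: sum_divide_distrib sum_distrib_left mult.assoc)
qed

lemma potential_lap:
  assumes "\<xi> > 0" "CARD('d::finite) \<ge> 2" "finite {y. \<mu> y \<noteq> 0}"
  shows "disc_lap \<xi> (disc_potential \<xi> \<mu>) x = - \<mu> (x::int^'d)"
proof -
  let ?S = "{y. \<mu> y \<noteq> 0}"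
  have "disc_lap \<xi> (disc_potential \<xi> \<mu>) x = \<xi> ^ CARD('d) * (\<Sum>y\<in>?S. \<mu> y * disc_lap \<xi> (\<lambda>x. g_xi \<xi> x y) x)"
    unfolding disc_potential_def[abs_def] by (rule disc_lap_linear[OF assms(3)])
  also have "\<dots> = \<xi> ^ CARD('d) * (\<Sum>y\<in>?S. \<mu> y * (- (if x = y then 1 else 0) / \<xi> ^ CARD('d)))"
    by (simp add: g_lap[OF assms(1,2)])
  also have "(\<Sum>y\<in>?S. \<mu> y * (- (if x = y then 1 else 0) / \<xi> ^ CARD('d))) = - (\<Sum>y\<in>?S. (if x = y then \<mu> y else 0)) / \<xi> ^ CARD('d)"
  proof -
    have "(\<Sum>y\<in>?S. \<mu> y * (- (if x = y then 1 else 0) / \<xi> ^ CARD('d))) = (\<Sum>y\<in>?S. - ((if x = y then \<mu> y else 0) / \<xi> ^ CARD('d)))"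
      by (intro sum.cong refl) simp
    also have "\<dots> = - (\<Sum>y\<in>?S. (if x = y then \<mu> y else 0) / \<xi> ^ CARD('d))" by (rule sum_negf)
    also have "\<dots> = - (\<Sum>y\<in>?S. (if x = y then \<mu> y else 0)) / \<xi> ^ CARD('d)" by (simp add: sum_divide_distrib)
    finally show ?thesis .
  qed
  also have "(\<Sum>y\<in>?S. (if x = y then \<mu> y else 0)) = \<mu> x"
    using assms(3) by (cases "\<mu> x = 0") (simp_all add: sum.delta)
  finally show ?thesis using assms(1) by simp
qed



lemma nbrs_sym: "z \<in> lat_nbrs y \<longleftrightarrow> y \<in> lat_nbrs (z::int^'d::finite)"
proof -
  have "z \<in> lat_nbrs y \<longleftrightarrow> (\<exists>i. z = y + axis i 1) \<or> (\<exists>i. z = y - axis i 1)"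
    unfolding lat_nbrs_def by auto
  also have "\<dots> \<longleftrightarrow> (\<exists>i. y = z - axis i 1) \<or> (\<exists>i. y = z + axis i 1)"
    by (auto simp: algebra_simps)
  also have "\<dots> \<longleftrightarrow> y \<in> lat_nbrs z"
    unfolding lat_nbrs_def by auto
  finally show ?thesis .
qed

lemma self_not_nbr: "x \<notin> lat_nbrs (x::int^'d::finite)"
proof
  assume "x \<in> lat_nbrs x"
  then obtain i where "x = x + axis i 1 \<or> x = x - axis i (1::int)" unfolding lat_nbrs_def by auto
  then have "axis i (1::int) = 0" by (auto simp: algebra_simps)
  then show False by (simp add: axis_eq_0_iff)
qed

lemma lap_delta:
  fixes x y :: "int^'d::finite"
  assumes "\<xi> \<noteq> 0"
  shows "\<xi>^2 * disc_lap \<xi> (ddelta x) y =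
     (if y \<in> lat_nbrs x then 1 / (2 * real CARD('d)) else 0) - (if y = x then 1 else 0)"
proof -
  have "(\<Sum>z\<in>lat_nbrs y. ddelta x z) = (if x \<in> lat_nbrs y then 1 else 0)"
    unfolding ddelta_def using finite_nbrs[of y] by (simp add: sum.delta')
  then show ?thesis
    unfolding disc_lap_alt using assms
    by (simp add: nbrs_sym[of x y] ddelta_def eq_commute[of x y])
qed

lemma disc_lap_add:
  "disc_lap \<xi> (\<lambda>x. f x + c * g x) y = disc_lap \<xi> f y + c * disc_lap \<xi> g (y::int^'d::finite)"
proof -
  have "(\<Sum>z\<in>lat_nbrs y. f z + c * g z - (f y + c * g y)) = (\<Sum>z\<in>lat_nbrs y. (f z - f y) + c * (g z - g y))"
    by (intro sum.cong refl) (simp add: algebra_simps)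
  also have "\<dots> = (\<Sum>z\<in>lat_nbrs y. f z - f y) + c * (\<Sum>z\<in>lat_nbrs y. g z - g y)"
    by (simp add: sum.distrib sum_distrib_left)
  finally show ?thesis unfolding disc_lap_def by (simp add: add_divide_distrib)
qed

lemma disc_lap_diff:
  "disc_lap \<xi> (\<lambda>x. f x - g x) y = disc_lap \<xi> f y - disc_lap \<xi> g (y::int^'d::finite)"
  using disc_lap_add[of \<xi> f "-1" g y] by simp

lemma disc_lap_zero: "disc_lap \<xi> (\<lambda>_. 0) y = 0"
  unfolding disc_lap_def by simp

lemma pos_part_nonneg: "0 \<le> pos_part t"
  unfolding pos_part_def by simp

lemma ts_Suc:
  "topple_seq \<xi> xs \<sigma> (Suc k) y = topple_seq \<xi> xs \<sigma> k y +
     pos_part (topple_seq \<xi> xs \<sigma> k (xs (Suc k))) * (\<xi>^2 * disc_lap \<xi> (ddelta (xs (Suc k))) y)"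
  by (simp add: topple_def mult.assoc)

lemma od_Suc:
  "odometer \<xi> xs \<sigma> (Suc k) x = odometer \<xi> xs \<sigma> k x +
     (\<xi>^2 * pos_part (topple_seq \<xi> xs \<sigma> k (xs (Suc k)))) * ddelta (xs (Suc k)) x"
proof -
  let ?f = "\<lambda>j. pos_part (topple_seq \<xi> xs \<sigma> (j - 1) x)"
  have fin: "finite {j. 1 \<le> j \<and> j \<le> k \<and> xs j = x}" by (rule finite_subset[of _ "{..k}"]) auto
  show ?thesis
  proof (cases "xs (Suc k) = x")
    case True
    have "{j. 1 \<le> j \<and> j \<le> Suc k \<and> xs j = x} = insert (Suc k) {j. 1 \<le> j \<and> j \<le> k \<and> xs j = x}"
      using True by (auto simp: le_Suc_eq)
    then have "(\<Sum>j\<in>{j. 1 \<le> j \<and> j \<le> Suc k \<and> xs j = x}. ?f j) = ?f (Suc k) + (\<Sum>j\<in>{j. 1 \<le> j \<and> j \<le> k \<and> xs j = x}. ?f j)"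
      using fin by simp
    then show ?thesis unfolding odometer_def ddelta_def using True by (simp add: algebra_simps)
  next
    case False
    have "{j. 1 \<le> j \<and> j \<le> Suc k \<and> xs j = x} = {j. 1 \<le> j \<and> j \<le> k \<and> xs j = x}"
      using False by (auto simp: le_Suc_eq)
    then show ?thesis unfolding odometer_def ddelta_def using False by simp
  qed
qed

lemma od_zero: "odometer \<xi> xs \<sigma> 0 x = 0"
  unfolding odometer_def by simp

lemma ts_eq:
  "topple_seq \<xi> xs \<sigma> k y = \<sigma> y + disc_lap \<xi> (odometer \<xi> xs \<sigma> k) (y::int^'d::finite)"
proof (induction k arbitrary: y)
  case 0
  then show ?case using disc_lap_zero[of \<xi> y] by (simp add: od_zero[abs_def])
next
  case (Suc k)
  let ?c = "\<xi>^2 * pos_part (topple_seq \<xi> xs \<sigma> k (xs (Suc k)))"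
  have "odometer \<xi> xs \<sigma> (Suc k) = (\<lambda>x. odometer \<xi> xs \<sigma> k x + ?c * ddelta (xs (Suc k)) x)"
    by (rule ext) (rule od_Suc)
  then have "disc_lap \<xi> (odometer \<xi> xs \<sigma> (Suc k)) y =
      disc_lap \<xi> (odometer \<xi> xs \<sigma> k) y + ?c * disc_lap \<xi> (ddelta (xs (Suc k))) y"
    by (simp add: disc_lap_add)
  then show ?case using Suc[of y] unfolding ts_Suc by (simp add: algebra_simps)
qed

lemma od_nonneg: "0 \<le> odometer \<xi> xs \<sigma> k x"
  unfolding odometer_def by (intro mult_nonneg_nonneg sum_nonneg pos_part_nonneg) auto

lemma od_mono: "odometer \<xi> xs \<sigma> k x \<le> odometer \<xi> xs \<sigma> (Suc k) x"
  unfolding od_Suc by (auto intro!: mult_nonneg_nonneg pos_part_nonneg simp: ddelta_def)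

lemma od_mono': "m \<le> n \<Longrightarrow> odometer \<xi> xs \<sigma> m x \<le> odometer \<xi> xs \<sigma> n x"
  by (induction n rule: dec_induct) (auto intro: order_trans[OF _ od_mono])

lemma od_outside:
  assumes "\<forall>k\<ge>1. xs k \<in> B" "x \<notin> B"
  shows "odometer \<xi> xs \<sigma> k x = 0"
proof -
  have e: "{j. 1 \<le> j \<and> j \<le> k \<and> xs j = x} = {}" using assms by auto
  show ?thesis unfolding odometer_def e by simp
qed



lemma finite_box: "finite {z::int^'d::finite. \<forall>i. z $ i \<in> {-K..K}}"
proof -
  have "{z::int^'d. \<forall>i. z $ i \<in> {-K..K}} \<subseteq> (\<lambda>f. \<chi> i. f i) ` (Pi\<^sub>E UNIV (\<lambda>_. {-K..K}))"
  proof
    fix z :: "int^'d" assume "z \<in> {z. \<forall>i. z $ i \<in> {-K..K}}"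
    then have "(\<lambda>i. z $ i) \<in> Pi\<^sub>E UNIV (\<lambda>_. {-K..K})" by auto
    moreover have "z = (\<chi> i. (\<lambda>i. z $ i) i)" by simp
    ultimately show "z \<in> (\<lambda>f. \<chi> i. f i) ` (Pi\<^sub>E UNIV (\<lambda>_. {-K..K}))" by blast
  qed
  moreover have "finite ((\<lambda>f. \<chi> i. f i) ` (Pi\<^sub>E (UNIV::'d set) (\<lambda>_. {-K..K})))"
    by (intro finite_imageI finite_PiE) auto
  ultimately show ?thesis by (rule finite_subset)
qed

lemma finite_lat_ball:
  assumes "\<xi> > 0"
  shows "finite (lat_ball \<xi> R :: (int^'d::finite) set)"
proof -
  define K where "K = \<lceil>R / \<xi>\<rceil>"
  have "lat_ball \<xi> R \<subseteq> {z::int^'d. \<forall>i. z $ i \<in> {-K..K}}"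
  proof
    fix z :: "int^'d" assume "z \<in> lat_ball \<xi> R"
    then have n: "norm (lat_point \<xi> z) < R" by (simp add: lat_ball_def)
    have "z $ i \<in> {-K..K}" for i
    proof -
      have "\<bar>lat_point \<xi> z $ i\<bar> \<le> norm (lat_point \<xi> z)" by (rule component_le_norm_cart)
      then have "\<xi> * \<bar>real_of_int (z $ i)\<bar> < R" using n assms by (simp add: lat_point_def abs_mult)
      then have "\<bar>real_of_int (z $ i)\<bar> < R / \<xi>" using assms by (simp add: field_simps)
      also have "R / \<xi> \<le> real_of_int K" unfolding K_def by simp
      finally have "\<bar>real_of_int (z $ i)\<bar> < real_of_int K" .
      then have "\<bar>z $ i\<bar> < K" by linarith
      then show ?thesis by (simp add: abs_less_iff)
    qed
    then show "z \<in> {z::int^'d. \<forall>i. z $ i \<in> {-K..K}}" by simp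
  qed
  then show ?thesis using finite_box finite_subset by blast
qed

definition psi :: "int^'d::finite \<Rightarrow> real" where
  "psi y = (\<Sum>i\<in>UNIV. (real_of_int (y $ i))^2)"

lemma psi_nonneg: "0 \<le> psi y"
  unfolding psi_def by (intro sum_nonneg) auto

lemma psi_shift:
  "psi (x + axis i 1) = psi x + 2 * real_of_int (x $ i) + 1"
  "psi (x - axis i 1) = psi x - 2 * real_of_int (x $ i) + 1"
proof -
  have "psi (x + axis i 1) = (\<Sum>j\<in>UNIV. (real_of_int (x $ j))^2 + (if j = i then 2 * real_of_int (x $ j) + 1 else 0))"
    unfolding psi_def by (intro sum.cong refl) (simp add: axis_def power2_eq_square algebra_simps)
  also have "\<dots> = psi x + 2 * real_of_int (x $ i) + 1"
    by (simp add: sum.distrib psi_def)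
  finally show "psi (x + axis i 1) = psi x + 2 * real_of_int (x $ i) + 1" .
  have "psi (x - axis i 1) = (\<Sum>j\<in>UNIV. (real_of_int (x $ j))^2 + (if j = i then - 2 * real_of_int (x $ j) + 1 else 0))"
    unfolding psi_def by (intro sum.cong refl) (simp add: axis_def power2_eq_square algebra_simps)
  also have "\<dots> = psi x - 2 * real_of_int (x $ i) + 1"
    by (simp add: sum.distrib psi_def)
  finally show "psi (x - axis i 1) = psi x - 2 * real_of_int (x $ i) + 1" .
qed

lemma psi_nbrs: "(\<Sum>z\<in>lat_nbrs x. psi z) = 2 * real CARD('d) * psi x + 2 * real CARD('d)"
  for x :: "int^'d::finite"
proof -
  have "(\<Sum>z\<in>lat_nbrs x. psi z) = (\<Sum>i\<in>(UNIV::'d set). 2 * psi x + 2)"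
    by (simp add: sum_nbrs psi_shift)
  also have "\<dots> = 2 * real CARD('d) * psi x + 2 * real CARD('d)" by (simp add: algebra_simps)
  finally show ?thesis .
qed

lemma sum_if_mem:
  assumes "finite N" "S \<subseteq> N"
  shows "(\<Sum>y\<in>N. (if y \<in> S then g y else 0)) = (\<Sum>y\<in>S. g y)"
proof -
  have "(\<Sum>y\<in>N. (if y \<in> S then g y else 0)) = sum g (N \<inter> S)"
    by (rule sum.inter_restrict[symmetric]) (rule assms(1))
  also have "N \<inter> S = S" using assms(2) by auto
  finally show ?thesis .
qed

definition NB :: "(int^'d::finite) set \<Rightarrow> (int^'d) set" where
  "NB B = B \<union> (\<Union>b\<in>B. lat_nbrs b)"

lemma NB_finite: "finite B \<Longrightarrow> finite (NB B)"
  unfolding NB_def using finite_nbrs by auto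

lemma step_sums:
  fixes x :: "int^'d::finite"
  assumes "\<xi> \<noteq> 0" "finite B" "x \<in> B"
  shows "(\<Sum>y\<in>NB B. \<xi>^2 * disc_lap \<xi> (ddelta x) y) = 0"
    "(\<Sum>y\<in>NB B. psi y * (\<xi>^2 * disc_lap \<xi> (ddelta x) y)) = 1"
proof -
  let ?N = "NB B"
  have fin: "finite ?N" using NB_finite[OF assms(2)] .
  have sub: "lat_nbrs x \<subseteq> ?N" "{x} \<subseteq> ?N" using assms(3) unfolding NB_def by auto
  have d: "real CARD('d) > 0" by simp
  have A: "(\<Sum>y\<in>?N. g y * (if y \<in> lat_nbrs x then 1 / (2 * real CARD('d)) else 0))
      = (\<Sum>y\<in>lat_nbrs x. g y) / (2 * real CARD('d))" for g :: "int^'d \<Rightarrow> real"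
  proof -
    have "(\<Sum>y\<in>?N. g y * (if y \<in> lat_nbrs x then 1 / (2 * real CARD('d)) else 0))
        = (\<Sum>y\<in>?N. (if y \<in> lat_nbrs x then g y / (2 * real CARD('d)) else 0))"
      by (intro sum.cong refl) simp
    also have "\<dots> = (\<Sum>y\<in>lat_nbrs x. g y / (2 * real CARD('d)))" by (rule sum_if_mem[OF fin sub(1)])
    finally show ?thesis by (simp add: sum_divide_distrib)
  qed
  have D: "(\<Sum>y\<in>?N. g y * (if y = x then 1 else 0)) = g x" for g :: "int^'d \<Rightarrow> real"
  proof -
    have "(\<Sum>y\<in>?N. g y * (if y = x then 1 else 0)) = (\<Sum>y\<in>?N. (if y = x then g y else 0))"
      by (intro sum.cong refl) simp
    also have "\<dots> = g x" using fin sub(2) by (simp add: sum.delta')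
    finally show ?thesis .
  qed
  have "(\<Sum>y\<in>?N. g y * (\<xi>^2 * disc_lap \<xi> (ddelta x) y)) =
      (\<Sum>y\<in>?N. g y * (if y \<in> lat_nbrs x then 1 / (2 * real CARD('d)) else 0)) - (\<Sum>y\<in>?N. g y * (if y = x then 1 else 0))"
    for g :: "int^'d \<Rightarrow> real"
    unfolding lap_delta[OF assms(1)] by (simp add: right_diff_distrib sum_subtractf)
  note E = this[unfolded A D]
  show "(\<Sum>y\<in>NB B. \<xi>^2 * disc_lap \<xi> (ddelta x) y) = 0"
    using E[of "\<lambda>_. 1"] d by (simp add: card_nbrs)
  show "(\<Sum>y\<in>NB B. psi y * (\<xi>^2 * disc_lap \<xi> (ddelta x) y)) = 1"
    using E[of psi] d by (simp add: psi_nbrs field_simps)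
qed



lemma ts_lower:
  fixes \<sigma> :: "int^'d::finite \<Rightarrow> real"
  assumes "\<xi> \<noteq> 0" "\<And>y. \<bar>\<sigma> y\<bar> \<le> C"
  shows "- C \<le> topple_seq \<xi> xs \<sigma> k y"
proof (induction k arbitrary: y)
  case 0
  then show ?case using assms(2)[of y] by simp
next
  case (Suc k)
  let ?x = "xs (Suc k)"
  let ?p = "pos_part (topple_seq \<xi> xs \<sigma> k ?x)"
  show ?case
  proof (cases "y = ?x")
    case True
    have "\<xi>^2 * disc_lap \<xi> (ddelta ?x) y = -1"
      unfolding lap_delta[OF assms(1)] using True self_not_nbr[of ?x] by simp
    then have "topple_seq \<xi> xs \<sigma> (Suc k) y = topple_seq \<xi> xs \<sigma> k ?x - ?p"
      unfolding ts_Suc using True by simp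
    moreover have "0 \<le> C" using assms(2)[of y] by simp
    ultimately show ?thesis using Suc[of ?x] unfolding pos_part_def by auto
  next
    case False
    have "\<xi>^2 * disc_lap \<xi> (ddelta ?x) y \<ge> 0"
      unfolding lap_delta[OF assms(1)] using False by simp
    then have "topple_seq \<xi> xs \<sigma> (Suc k) y \<ge> topple_seq \<xi> xs \<sigma> k y"
      unfolding ts_Suc by (simp add: pos_part_nonneg)
    then show ?thesis using Suc[of y] by simp
  qed
qed

definition TT :: "real \<Rightarrow> (nat \<Rightarrow> int^'d::finite) \<Rightarrow> (int^'d \<Rightarrow> real) \<Rightarrow> nat \<Rightarrow> real" where
  "TT \<xi> xs \<sigma> k = (\<Sum>j\<in>{1..k}. pos_part (topple_seq \<xi> xs \<sigma> (j - 1) (xs j)))"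

lemma TT_Suc: "TT \<xi> xs \<sigma> (Suc k) = TT \<xi> xs \<sigma> k + pos_part (topple_seq \<xi> xs \<sigma> k (xs (Suc k)))"
  unfolding TT_def by simp

lemma od_le_TT: "odometer \<xi> xs \<sigma> k x \<le> \<xi>^2 * TT \<xi> xs \<sigma> k"
proof -
  have "(\<Sum>j\<in>{j. 1 \<le> j \<and> j \<le> k \<and> xs j = x}. pos_part (topple_seq \<xi> xs \<sigma> (j - 1) x))
      = (\<Sum>j\<in>{j. 1 \<le> j \<and> j \<le> k \<and> xs j = x}. pos_part (topple_seq \<xi> xs \<sigma> (j - 1) (xs j)))"
    by (intro sum.cong refl) auto
  also have "\<dots> \<le> (\<Sum>j\<in>{1..k}. pos_part (topple_seq \<xi> xs \<sigma> (j - 1) (xs j)))"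
    by (intro sum_mono2) (auto simp: pos_part_nonneg)
  finally show ?thesis unfolding odometer_def TT_def by (intro mult_left_mono) auto
qed

lemma moments:
  fixes \<sigma> :: "int^'d::finite \<Rightarrow> real"
  assumes "\<xi> \<noteq> 0" "finite B" "\<forall>k\<ge>1. xs k \<in> B"
  shows "(\<Sum>y\<in>NB B. topple_seq \<xi> xs \<sigma> k y) = (\<Sum>y\<in>NB B. \<sigma> y)"
    "(\<Sum>y\<in>NB B. psi y * topple_seq \<xi> xs \<sigma> k y) = (\<Sum>y\<in>NB B. psi y * \<sigma> y) + TT \<xi> xs \<sigma> k"
proof (induction k)
  case 0
  { case 1 show ?case by simp }
  { case 2 show ?case by (simp add: TT_def) }
next
  case (Suc k)
  let ?x = "xs (Suc k)"
  let ?p = "pos_part (topple_seq \<xi> xs \<sigma> k ?x)"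
  have xB: "?x \<in> B" using assms(3) by simp
  note S = step_sums[OF assms(1,2) xB]
  { case 1
    have "(\<Sum>y\<in>NB B. topple_seq \<xi> xs \<sigma> (Suc k) y) = (\<Sum>y\<in>NB B. topple_seq \<xi> xs \<sigma> k y) + ?p * (\<Sum>y\<in>NB B. \<xi>^2 * disc_lap \<xi> (ddelta ?x) y)"
      unfolding ts_Suc by (simp add: sum.distrib sum_distrib_left)
    then show ?case using Suc.IH(1) S(1) by simp }
  { case 2
    have "(\<Sum>y\<in>NB B. psi y * topple_seq \<xi> xs \<sigma> (Suc k) y) = (\<Sum>y\<in>NB B. psi y * topple_seq \<xi> xs \<sigma> k y) + ?p * (\<Sum>y\<in>NB B. psi y * (\<xi>^2 * disc_lap \<xi> (ddelta ?x) y))"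
      unfolding ts_Suc by (simp add: sum.distrib sum_distrib_left distrib_left mult_ac)
    then show ?case using Suc.IH(2) S(2) by (simp add: TT_Suc) }
qed

lemma TT_bounded:
  fixes \<sigma> :: "int^'d::finite \<Rightarrow> real"
  assumes "\<xi> \<noteq> 0" "finite B" "\<forall>k\<ge>1. xs k \<in> B" "\<And>y. \<bar>\<sigma> y\<bar> \<le> C"
  shows "\<exists>K. \<forall>k. TT \<xi> xs \<sigma> k \<le> K"
proof -
  let ?N = "NB B"
  let ?P = "(\<Sum>y\<in>?N. psi y)"
  have fin: "finite ?N" by (rule NB_finite[OF assms(2)])
  have C0: "0 \<le> C" using assms(4)[of 0] by simp
  have "TT \<xi> xs \<sigma> k \<le> ?P * ((\<Sum>y\<in>?N. \<sigma> y) + 2 * C * real (card ?N)) - (\<Sum>y\<in>?N. psi y * \<sigma> y)" for k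
  proof -
    have pt: "psi y * topple_seq \<xi> xs \<sigma> k y \<le> ?P * (topple_seq \<xi> xs \<sigma> k y + 2 * C)" if "y \<in> ?N" for y
    proof -
      have low: "- C \<le> topple_seq \<xi> xs \<sigma> k y" by (rule ts_lower[OF assms(1,4)])
      have pP: "psi y \<le> ?P" by (rule member_le_sum[OF that]) (auto simp: psi_nonneg fin)
      show ?thesis
      proof (cases "topple_seq \<xi> xs \<sigma> k y \<ge> 0")
        case True
        have "psi y * topple_seq \<xi> xs \<sigma> k y \<le> ?P * topple_seq \<xi> xs \<sigma> k y"
          using pP True by (rule mult_right_mono)
        also have "\<dots> \<le> ?P * (topple_seq \<xi> xs \<sigma> k y + 2 * C)"
          using C0 psi_nonneg[of y] pP by (intro mult_left_mono) auto
        finally show ?thesis .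
      next
        case False
        have "psi y * topple_seq \<xi> xs \<sigma> k y \<le> 0"
          using False psi_nonneg[of y] by (simp add: mult_nonneg_nonpos)
        also have "0 \<le> ?P * (topple_seq \<xi> xs \<sigma> k y + 2 * C)"
          using low C0 psi_nonneg[of y] pP by (intro mult_nonneg_nonneg) auto
        finally show ?thesis .
      qed
    qed
    have "(\<Sum>y\<in>?N. psi y * \<sigma> y) + TT \<xi> xs \<sigma> k = (\<Sum>y\<in>?N. psi y * topple_seq \<xi> xs \<sigma> k y)"
      by (rule moments(2)[OF assms(1-3), symmetric])
    also have "\<dots> \<le> (\<Sum>y\<in>?N. ?P * (topple_seq \<xi> xs \<sigma> k y + 2 * C))"
      by (rule sum_mono) (rule pt)
    also have "\<dots> = ?P * ((\<Sum>y\<in>?N. topple_seq \<xi> xs \<sigma> k y) + 2 * C * real (card ?N))"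
      by (simp add: sum.distrib sum_distrib_left[symmetric])
    also have "\<dots> = ?P * ((\<Sum>y\<in>?N. \<sigma> y) + 2 * C * real (card ?N))"
      by (simp only: moments(1)[OF assms(1-3)])
    finally show ?thesis by simp
  qed
  then show ?thesis by blast
qed

lemma od_convergent:
  fixes \<sigma> :: "int^'d::finite \<Rightarrow> real"
  assumes "\<xi> \<noteq> 0" "finite B" "\<forall>k\<ge>1. xs k \<in> B" "\<And>y. \<bar>\<sigma> y\<bar> \<le> C"
  shows "convergent (\<lambda>k. odometer \<xi> xs \<sigma> k x)"
proof -
  obtain K where K: "\<And>k. TT \<xi> xs \<sigma> k \<le> K" using TT_bounded[where \<sigma>=\<sigma> and C=C, OF assms] by blast
  have "norm (odometer \<xi> xs \<sigma> k x) \<le> \<xi>^2 * K" for k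
  proof -
    have "norm (odometer \<xi> xs \<sigma> k x) = odometer \<xi> xs \<sigma> k x" using od_nonneg[of \<xi> xs \<sigma> k x] by simp
    also have "\<dots> \<le> \<xi>^2 * TT \<xi> xs \<sigma> k" by (rule od_le_TT)
    also have "\<dots> \<le> \<xi>^2 * K" using K by (intro mult_left_mono) auto
    finally show ?thesis .
  qed
  then have "Bseq (\<lambda>k. odometer \<xi> xs \<sigma> k x)" by (rule BseqI')
  moreover have "\<forall>m n. m \<le> n \<longrightarrow> odometer \<xi> xs \<sigma> m x \<le> odometer \<xi> xs \<sigma> n x"
    by (auto intro: od_mono')
  ultimately show ?thesis by (rule Bseq_mono_convergent)
qed



lemma ts_visit:
  assumes "\<xi> \<noteq> 0"
  shows "topple_seq \<xi> xs \<sigma> (Suc m) (xs (Suc m)) = min (topple_seq \<xi> xs \<sigma> m (xs (Suc m))) 0"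
proof -
  have "\<xi>^2 * disc_lap \<xi> (ddelta (xs (Suc m))) (xs (Suc m)) = -1"
    unfolding lap_delta[OF assms] using self_not_nbr[of "xs (Suc m)"] by simp
  then show ?thesis unfolding ts_Suc pos_part_def by simp
qed

lemma ts_persist:
  assumes "\<xi> \<noteq> 0" "0 \<le> topple_seq \<xi> xs \<sigma> m x"
  shows "0 \<le> topple_seq \<xi> xs \<sigma> (Suc m) x"
proof (cases "x = xs (Suc m)")
  case True
  then show ?thesis using ts_visit[OF assms(1), of xs \<sigma> m] assms(2) by simp
next
  case False
  have "\<xi>^2 * disc_lap \<xi> (ddelta (xs (Suc m))) x \<ge> 0"
    unfolding lap_delta[OF assms(1)] using False by simp
  then show ?thesis unfolding ts_Suc using assms(2) by (simp add: pos_part_nonneg)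
qed

lemma ts_persist':
  assumes "\<xi> \<noteq> 0" "0 \<le> topple_seq \<xi> xs \<sigma> m x" "m \<le> n"
  shows "0 \<le> topple_seq \<xi> xs \<sigma> n x"
  using assms(3)
proof (induction n rule: dec_induct)
  case base then show ?case using assms(2) .
next
  case (step n) then show ?case using ts_persist[OF assms(1)] by blast
qed

lemma nu_nonpos:
  assumes "\<xi> \<noteq> 0" "infinite {k. k \<ge> 1 \<and> xs k = x}" "(\<lambda>k. topple_seq \<xi> xs \<sigma> k x) \<longlonglongrightarrow> L"
  shows "L \<le> 0"
proof (rule ccontr)
  assume "\<not> L \<le> 0"
  then have "eventually (\<lambda>k. topple_seq \<xi> xs \<sigma> k x > 0) sequentially"
    using assms(3) by (intro order_tendstoD(1)) auto
  then obtain N where N: "\<And>k. k \<ge> N \<Longrightarrow> topple_seq \<xi> xs \<sigma> k x > 0"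
    by (auto simp: eventually_sequentially)
  obtain k where k: "k \<ge> Suc N" "k \<ge> 1" "xs k = x"
    using assms(2) unfolding infinite_nat_iff_unbounded_le by auto
  then obtain m where m: "k = Suc m" "m \<ge> N" by (cases k) auto
  have "topple_seq \<xi> xs \<sigma> (Suc m) x \<le> 0"
    using ts_visit[OF assms(1), of xs \<sigma> m] k m by simp
  moreover have "topple_seq \<xi> xs \<sigma> (Suc m) x > 0" using N[of "Suc m"] m by simp
  ultimately show False by simp
qed

lemma nu_nonneg:
  assumes "\<xi> \<noteq> 0" "(\<lambda>k. odometer \<xi> xs \<sigma> k x) \<longlonglongrightarrow> U0" "U0 > 0"
    "(\<lambda>k. topple_seq \<xi> xs \<sigma> k x) \<longlonglongrightarrow> L"
  shows "L \<ge> 0"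
proof -
  have "\<exists>k. odometer \<xi> xs \<sigma> k x \<noteq> 0"
  proof (rule ccontr)
    assume "\<not> ?thesis"
    then have "(\<lambda>k. odometer \<xi> xs \<sigma> k x) = (\<lambda>_. 0)" by auto
    then have "(\<lambda>k. odometer \<xi> xs \<sigma> k x) \<longlonglongrightarrow> 0" by simp
    then have "U0 = 0" using assms(2) LIMSEQ_unique by blast
    then show False using assms(3) by simp
  qed
  then obtain k where k: "odometer \<xi> xs \<sigma> k x \<noteq> 0" by blast
  have "\<exists>j\<in>{j. 1 \<le> j \<and> j \<le> k \<and> xs j = x}. pos_part (topple_seq \<xi> xs \<sigma> (j - 1) x) \<noteq> 0"
  proof (rule ccontr)
    assume "\<not> ?thesis"
    then have "odometer \<xi> xs \<sigma> k x = 0" unfolding odometer_def by simp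
    then show False using k by simp
  qed
  then obtain j where j: "pos_part (topple_seq \<xi> xs \<sigma> (j - 1) x) \<noteq> 0" by blast
  then have j0: "0 \<le> topple_seq \<xi> xs \<sigma> (j - 1) x" unfolding pos_part_def by (auto simp: max_def split: if_splits)
  have "\<forall>n\<ge>j - 1. 0 \<le> topple_seq \<xi> xs \<sigma> n x"
    using ts_persist'[OF assms(1) j0] by blast
  then show ?thesis using LIMSEQ_le_const[OF assms(4)] by blast
qed

lemma max_principle:
  fixes w :: "int^'d::finite \<Rightarrow> real"
  assumes "\<xi> \<noteq> 0" "finite A" "\<forall>y\<in>A. disc_lap \<xi> w y \<ge> 0" "\<forall>y. y \<notin> A \<longrightarrow> w y \<le> 0"
  shows "w x \<le> 0"
proof (rule ccontr)
  assume "\<not> w x \<le> 0"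
  then have wx: "w x > 0" by simp
  then have xA: "x \<in> A" using assms(4) by auto
  define M where "M = Max (w ` A)"
  have Mge: "w y \<le> M" if "y \<in> A" for y unfolding M_def using assms(2) that by auto
  have "M \<in> w ` A" unfolding M_def using assms(2) xA by (intro Max_in) auto
  have Mpos: "M > 0" using Mge[OF xA] wx by simp
  define Am where "Am = {y\<in>A. w y = M}"
  have Amf: "finite Am" unfolding Am_def using assms(2) by simp
  have Amne: "Am \<noteq> {}" unfolding Am_def using \<open>M \<in> w ` A\<close> by auto
  obtain i0 :: 'd where True by simp
  define m where "m = Max ((\<lambda>y. y $ i0) ` Am)"
  have "m \<in> (\<lambda>y. y $ i0) ` Am" unfolding m_def using Amf Amne by (intro Max_in) auto
  then obtain y where y: "y \<in> Am" "y $ i0 = m" by auto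
  have mge: "z $ i0 \<le> m" if "z \<in> Am" for z unfolding m_def using Amf that by auto
  have yA: "y \<in> A" and wy: "w y = M" using y(1) unfolding Am_def by auto
  have le: "w z - w y \<le> 0" if "z \<in> lat_nbrs y" for z
  proof (cases "z \<in> A")
    case True then show ?thesis using Mge wy by simp
  next
    case False then show ?thesis using assms(4) Mpos wy by force
  qed
  have "disc_lap \<xi> w y \<ge> 0" using assms(3) yA by simp
  then have "(\<Sum>z\<in>lat_nbrs y. w z - w y) \<ge> 0"
  proof -
    have pos: "0 < 2 * real CARD('d) * \<xi>^2" using assms(1) by simp
    have "(\<Sum>z\<in>lat_nbrs y. w z - w y) = disc_lap \<xi> w y * (2 * real CARD('d) * \<xi>^2)"
      unfolding disc_lap_def using pos assms(1) by simp
    then show ?thesis using \<open>disc_lap \<xi> w y \<ge> 0\<close> pos by simp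
  qed
  moreover have "(\<Sum>z\<in>lat_nbrs y. w z - w y) \<le> 0" using le by (intro sum_nonpos) auto
  ultimately have s0: "(\<Sum>z\<in>lat_nbrs y. w z - w y) = 0" by linarith
  have "(\<Sum>z\<in>lat_nbrs y. w y - w z) = 0" using s0 by (simp add: sum_subtractf)
  then have all0: "\<forall>z\<in>lat_nbrs y. w y - w z = 0"
    using le finite_nbrs[of y] by (subst sum_nonneg_eq_0_iff[symmetric]) auto
  let ?z = "y + axis i0 1"
  have zn: "?z \<in> lat_nbrs y" unfolding lat_nbrs_def by auto
  then have wz: "w ?z = M" using all0 wy by auto
  then have "?z \<in> A" using assms(4) Mpos by force
  then have "?z \<in> Am" unfolding Am_def using wz by simp
  then have "?z $ i0 \<le> m" by (rule mge)
  moreover have "?z $ i0 = m + 1" using y(2) by (simp add: axis_def)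
  ultimately show False by simp
qed



lemma disc_lap_tendsto:
  assumes "\<And>y. (\<lambda>k. g k y) \<longlonglongrightarrow> u y" "\<xi> \<noteq> 0"
  shows "(\<lambda>k. disc_lap \<xi> (g k) x) \<longlonglongrightarrow> disc_lap \<xi> u (x::int^'d::finite)"
  unfolding disc_lap_def by (intro tendsto_intros assms) (use assms(2) in simp)

theorem proposition3p2:
  fixes \<xi> R :: real and \<sigma> :: "int^'d \<Rightarrow> real" and xs :: "nat \<Rightarrow> int^'d"
  assumes "CARD('d) \<ge> 2" and "\<xi> > 0" and "R > 0"
    and "bounded (range \<sigma>)" and "finite {z. \<sigma> z \<noteq> 0}"
    and "{z. \<sigma> z \<noteq> 0} \<subseteq> lat_ball \<xi> R"
    and "infinitely_covering (lat_ball \<xi> R) xs"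
  shows "(\<forall>x. convergent (\<lambda>k. topple_seq \<xi> xs \<sigma> k x))
       \<and> (\<forall>x. convergent (\<lambda>k. odometer \<xi> xs \<sigma> k x))
       \<and> (\<lambda>x. lim (\<lambda>k. topple_seq \<xi> xs \<sigma> k x))
            = (\<lambda>x. \<sigma> x + disc_lap \<xi> (\<lambda>y. lim (\<lambda>k. odometer \<xi> xs \<sigma> k y)) x)
       \<and> (\<lambda>x. lim (\<lambda>k. odometer \<xi> xs \<sigma> k x))
            = (\<lambda>x. disc_potential \<xi> \<sigma> x - majorant_v \<xi> R \<sigma> x)"
proof -
  let ?B = "lat_ball \<xi> R :: (int^'d) set"
  have xi0: "\<xi> \<noteq> 0" using assms(2) by simp
  obtain C where C: "\<And>y. \<bar>\<sigma> y\<bar> \<le> C"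
    using assms(4) unfolding bounded_iff by auto
  have Bfin: "finite ?B" by (rule finite_lat_ball[OF assms(2)])
  have cov1: "\<forall>k\<ge>1. xs k \<in> ?B" and cov2: "\<And>z. z \<in> ?B \<Longrightarrow> infinite {k. k \<ge> 1 \<and> xs k = z}"
    using assms(7) unfolding infinitely_covering_def by auto
  define u where "u = (\<lambda>y. lim (\<lambda>k. odometer \<xi> xs \<sigma> k y))"
  have odc: "convergent (\<lambda>k. odometer \<xi> xs \<sigma> k x)" for x
    by (rule od_convergent[where C=C, OF xi0 Bfin cov1 C])
  have odl: "(\<lambda>k. odometer \<xi> xs \<sigma> k x) \<longlonglongrightarrow> u x" for x
    unfolding u_def using odc[of x] by (simp add: convergent_LIMSEQ_iff)
  define \<nu> where "\<nu> = (\<lambda>x. \<sigma> x + disc_lap \<xi> u x)"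
  have tsl: "(\<lambda>k. topple_seq \<xi> xs \<sigma> k x) \<longlonglongrightarrow> \<nu> x" for x
  proof -
    have "(\<lambda>k. \<sigma> x + disc_lap \<xi> (odometer \<xi> xs \<sigma> k) x) \<longlonglongrightarrow> \<sigma> x + disc_lap \<xi> u x"
      by (intro tendsto_intros disc_lap_tendsto odl xi0)
    then show ?thesis unfolding \<nu>_def by (simp only: ts_eq[symmetric])
  qed
  have tsc: "convergent (\<lambda>k. topple_seq \<xi> xs \<sigma> k x)" for x
    using tsl[of x] unfolding convergent_def by blast
  have nu_lim: "lim (\<lambda>k. topple_seq \<xi> xs \<sigma> k x) = \<nu> x" for x
    using tsl[of x] by (rule limI)
  have u_nonneg: "0 \<le> u x" for x
    by (rule LIMSEQ_le_const[OF odl]) (auto intro: od_nonneg)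
  have u_out: "u x = 0" if "x \<notin> ?B" for x
  proof -
    have "(\<lambda>k. odometer \<xi> xs \<sigma> k x) = (\<lambda>_. 0)" using od_outside[OF cov1 that] by auto
    then show ?thesis using odl[of x] LIMSEQ_unique by (metis tendsto_const)
  qed
  have nu_B: "\<nu> x \<le> 0" if "x \<in> ?B" for x
    by (rule nu_nonpos[OF xi0 cov2[OF that] tsl])
  have nu_A: "\<nu> x = 0" if "u x > 0" for x
  proof -
    have "x \<in> ?B" using u_out that by force
    then show ?thesis using nu_B nu_nonneg[OF xi0 odl that tsl] by force
  qed
  let ?U = "disc_potential \<xi> \<sigma>"
  have lapU: "disc_lap \<xi> ?U x = - \<sigma> x" for x
    by (rule potential_lap[OF assms(2,1,5)])
  define W where "W = (\<lambda>z. ?U z - u z)"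
  have lapW: "disc_lap \<xi> W z = - \<nu> z" for z
    unfolding W_def disc_lap_diff lapU \<nu>_def by simp
  have v_eq: "majorant_v \<xi> R \<sigma> x = W x" for x
  proof -
    let ?S = "{f x | f. (\<forall>z\<in>lat_ball \<xi> R. disc_lap \<xi> f z \<ge> 0) \<and> (\<forall>z. f z \<le> disc_potential \<xi> \<sigma> z)}"
    have Win: "W x \<in> ?S"
    proof -
      have "\<forall>z\<in>lat_ball \<xi> R. disc_lap \<xi> W z \<ge> 0" using lapW nu_B by simp
      moreover have "\<forall>z. W z \<le> disc_potential \<xi> \<sigma> z" unfolding W_def using u_nonneg by simp
      ultimately show ?thesis by blast
    qed
    have bdd: "bdd_above ?S"
      by (rule bdd_aboveI[where M="?U x"]) auto
    have le: "t \<le> W x" if "t \<in> ?S" for t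
    proof -
      obtain f where f: "t = f x" "\<forall>z\<in>lat_ball \<xi> R. disc_lap \<xi> f z \<ge> 0" "\<forall>z. f z \<le> ?U z"
        using \<open>t \<in> ?S\<close> by blast
      have "(\<lambda>z. f z - W z) x \<le> 0"
      proof (rule max_principle[OF xi0, where A="{z. u z > 0}"])
        show "finite {z. u z > 0}"
          by (rule finite_subset[OF _ Bfin]) (use u_out in force)
        show "\<forall>y\<in>{z. u z > 0}. 0 \<le> disc_lap \<xi> (\<lambda>z. f z - W z) y"
        proof
          fix y assume "y \<in> {z. u z > 0}"
          then have uy: "u y > 0" by simp
          then have yB: "y \<in> ?B" using u_out by force
          have "disc_lap \<xi> (\<lambda>z. f z - W z) y = disc_lap \<xi> f y + \<nu> y"
            by (simp add: disc_lap_diff lapW)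
          then show "0 \<le> disc_lap \<xi> (\<lambda>z. f z - W z) y" using f(2) yB nu_A[OF uy] by simp
        qed
        show "\<forall>y. y \<notin> {z. u z > 0} \<longrightarrow> f y - W y \<le> 0"
        proof (intro allI impI)
          fix y assume "y \<notin> {z. u z > 0}"
          then have "u y = 0" using u_nonneg[of y] by simp
          then show "f y - W y \<le> 0" using f(3)[rule_format, of y] unfolding W_def by simp
        qed
      qed
      then show ?thesis using f(1) by simp
    qed
    have "majorant_v \<xi> R \<sigma> x = Sup ?S" unfolding majorant_v_def by simp
    also have "\<dots> = W x"
    proof (rule antisym)
      show "Sup ?S \<le> W x" by (rule cSup_least) (use Win le in auto)
      show "W x \<le> Sup ?S" by (rule cSup_upper[OF Win bdd])
    qed
    finally show ?thesis .
  qed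
  show ?thesis
  proof (intro conjI allI)
    show "convergent (\<lambda>k. topple_seq \<xi> xs \<sigma> k x)" for x by (rule tsc)
    show "convergent (\<lambda>k. odometer \<xi> xs \<sigma> k x)" for x by (rule odc)
    show "(\<lambda>x. lim (\<lambda>k. topple_seq \<xi> xs \<sigma> k x)) =
        (\<lambda>x. \<sigma> x + disc_lap \<xi> (\<lambda>y. lim (\<lambda>k. odometer \<xi> xs \<sigma> k y)) x)"
      using nu_lim unfolding \<nu>_def u_def by simp
    show "(\<lambda>x. lim (\<lambda>k. odometer \<xi> xs \<sigma> k x)) = (\<lambda>x. disc_potential \<xi> \<sigma> x - majorant_v \<xi> R \<sigma> x)"
      using v_eq unfolding W_def u_def by simp
  qed
qed

end
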